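(* Let $n\in\mathbb{N}$ and $\lambda=(\lambda_1,\dots,\lambda_n)\in\mathbb{R}^n$. Then \[\sum_{P\in\mathcal{P}^0_{ord}(\lambda)}(-1)^{|P|}\varepsilon(P)\varepsilon'(P)=(-1)^n\sum_{p\in\mathcal{P}^0_{\le2}(\lambda)}\varepsilon(p).\]
   Context: Partitions $p=\{I_\alpha\}$ and ordered partitions $P=(I_1,\dots,I_k)$ of $\{1,\dots,n\}$ into nonempty blocks; $|P|=k$. $s_J(\lambda)=\sum_{i\in J}\lambda_i$. $\mathcal{P}_{ord}(\lambda)$: ordered partitions with $s_{I_1}(\lambda)+\dots+s_{I_i}(\lambda)>0$ for all $i$; $\mathcal{P}(\lambda)$: partitions with $s_{I_\alpha}(\lambda)>0$ for every block. $\mathcal{P}^0(n)$: partitions with at most one block of odd cardinality; $\mathcal{P}^0_{ord}(n)$ the ordered partitions whose underlying partition is in $\mathcal{P}^0(n)$; $\mathcal{P}^0_{ord}(\lambda)=\mathcal{P}_{ord}(\lambda)\cap\mathcal{P}^0_{ord}(n)$; $\mathcal{P}^0_{\le2}(\lambda)$ is the set of $p\in\mathcal{P}^0(n)\cap\mathcal{P}(\lambda)$ with all blocks of size $\le 2$. For $P=(I_1,\dots,I_k)$ with $n_i=|I_i|$, $\sigma_P\in\mathfrak{S}_n$ is the unique permutation such that $\sigma_P^{-1}$ maps $\{n_1+\dots+n_i+1,\dots,n_1+\dots+n_{i+1}\}$ increasingly onto $I_{i+1}$ for each $i$; $\varepsilon(P)=\mathrm{sgn}(\sigma_P)$; for $p\in\mathcal{P}^0(n)$,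 $\varepsilon(p)$ is the common value of $\varepsilon(P)$ over orderings $P$ of $p$. $\varepsilon'(P)=(-1)^{\frac12\sum_i|I_i|(|I_i|-1)}$. *)

theory Defs
  imports Complex_Main "HOL-Library.Disjoint_Sets" "HOL-Combinatorics.Permutations"
begin

text \<open>Ground set is {1..n}; lambda is given as a function nat => real (only values on {1..n} matter).
Ordered partitions are lists of blocks, partitions are sets of blocks.\<close>

definition sJ :: "nat set \<Rightarrow> (nat \<Rightarrow> real) \<Rightarrow> real" where
  "sJ J lam = (\<Sum>i\<in>J. lam i)"

definition ordpart :: "nat \<Rightarrow> nat set list set" where
  "ordpart n = {P. partition_on {1..n} (set P) \<and> distinct P}"

definition part :: "nat \<Rightarrow> nat set set set" where
  "part n = {p. partition_on {1..n} p}"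

definition Pord :: "nat \<Rightarrow> (nat \<Rightarrow> real) \<Rightarrow> nat set list set" where
  "Pord n lam = {P \<in> ordpart n. \<forall>i\<in>{1..length P}. sum_list (map (\<lambda>I. sJ I lam) (take i P)) > 0}"

definition Plam :: "nat \<Rightarrow> (nat \<Rightarrow> real) \<Rightarrow> nat set set set" where
  "Plam n lam = {p \<in> part n. \<forall>I\<in>p. sJ I lam > 0}"

definition P0 :: "nat \<Rightarrow> nat set set set" where
  "P0 n = {p \<in> part n. card {I \<in> p. odd (card I)} \<le> 1}"

definition P0ord :: "nat \<Rightarrow> nat set list set" where
  "P0ord n = {P \<in> ordpart n. set P \<in> P0 n}"

definition P0ord_lam :: "nat \<Rightarrow> (nat \<Rightarrow> real) \<Rightarrow> nat set list set" where
  "P0ord_lam n lam = Pord n lam \<inter> P0ord n"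

definition P0le2 :: "nat \<Rightarrow> (nat \<Rightarrow> real) \<Rightarrow> nat set set set" where
  "P0le2 n lam = {p \<in> P0 n \<inter> Plam n lam. \<forall>I\<in>p. card I \<le> 2}"

text \<open>sigma_P sends element x of block I_k to its position
 n_1+...+n_(k-1) + #{y in I_k. y <= x}; identity outside the ground set.
 Then sigma_P^-1 maps the k-th segment increasingly onto I_k.\<close>
definition sigmaP :: "nat set list \<Rightarrow> nat \<Rightarrow> nat" where
  "sigmaP P x = (if x \<in> \<Union>(set P) then
      (let k = (THE k. k < length P \<and> x \<in> P ! k) in
        (\<Sum>j<k. card (P ! j)) + card {y \<in> P ! k. y \<le> x})
    else x)"

definition epsP :: "nat set list \<Rightarrow> int" where
  "epsP P = sign (sigmaP P)"

text \<open>epsilon(p): the value of epsilon on an ordering of p (common value for p in P^0(n)).\<close>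
definition eps_part :: "nat \<Rightarrow> nat set set \<Rightarrow> int" where
  "eps_part n p = epsP (SOME P. P \<in> ordpart n \<and> set P = p)"

definition eps' :: "nat set list \<Rightarrow> int" where
  "eps' P = (-1) ^ ((\<Sum>I\<leftarrow>P. card I * (card I - 1)) div 2)"

end

theory Submission
  imports Defs
begin


definition invs :: "nat set \<Rightarrow> (nat \<Rightarrow> nat) \<Rightarrow> nat" where
  "invs A p = card {(x,y). x \<in> A \<and> y \<in> A \<and> x < y \<and> p y < p x}"

lemma invs_adj:
  assumes pA: "p permutes A" and fin: "finite A" and iA: "i \<in> A" "Suc i \<in> A"
  shows "((-1::int) ^ invs A (p \<circ> Transposition.transpose i (Suc i))) = - ((-1) ^ invs A p)"
proof -
  define t where "t = Transposition.transpose i (Suc i)"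
  define X where "X = {(x,y). x \<in> A \<and> y \<in> A \<and> x < y \<and> p y < p x}"
  define X' where "X' = {(x,y). x \<in> A \<and> y \<in> A \<and> x < y \<and> (p \<circ> t) y < (p \<circ> t) x}"
  have finX: "finite X" unfolding X_def by (rule finite_subset[of _ "A \<times> A"]) (use fin in auto)
  have finX': "finite X'" unfolding X'_def by (rule finite_subset[of _ "A \<times> A"]) (use fin in auto)
  have injp: "inj p" using pA permutes_inj by blast
  have tA: "x \<in> A \<Longrightarrow> t x \<in> A" for x using iA by (auto simp: t_def Transposition.transpose_def)
  have tt: "t (t x) = x" for x by (simp add: t_def)
  have mono_t: "t x < t y" if "x < y" "(x,y) \<noteq> (i, Suc i)" for x y
    using that by (auto simp: t_def Transposition.transpose_def)
  have img: "X' - {(i, Suc i)} = (\<lambda>(x,y). (t x, t y)) ` (X - {(i, Suc i)})"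
  proof (intro set_eqI iffI)
    fix z assume z: "z \<in> X' - {(i, Suc i)}"
    obtain x y where zz: "z = (x,y)" by force
    have h: "x \<in> A" "y \<in> A" "x < y" "p (t y) < p (t x)" "(x,y) \<noteq> (i, Suc i)"
      using z unfolding zz X'_def by auto
    have "(t x, t y) \<noteq> (i, Suc i)"
    proof
      assume "(t x, t y) = (i, Suc i)"
      then have "x = t i" "y = t (Suc i)" using tt by (metis prod.inject)+
      then show False using h(3) by (simp add: t_def)
    qed
    then have "(t x, t y) \<in> X - {(i, Suc i)}"
      using h tA[of x] tA[of y] mono_t[of x y] unfolding X_def by simp
    moreover have "z = (\<lambda>(x,y). (t x, t y)) (t x, t y)" using tt zz by simp
    ultimately show "z \<in> (\<lambda>(x,y). (t x, t y)) ` (X - {(i, Suc i)})" by blast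
  next
    fix z assume "z \<in> (\<lambda>(x,y). (t x, t y)) ` (X - {(i, Suc i)})"
    then obtain x y where xy: "(x,y) \<in> X - {(i, Suc i)}" and zz: "z = (t x, t y)" by auto
    have h: "x \<in> A" "y \<in> A" "x < y" "p y < p x" "(x,y) \<noteq> (i, Suc i)"
      using xy unfolding X_def by auto
    have "(t x, t y) \<noteq> (i, Suc i)"
    proof
      assume "(t x, t y) = (i, Suc i)"
      then have "x = t i" "y = t (Suc i)" using tt by (metis prod.inject)+
      then show False using h(3) by (simp add: t_def)
    qed
    then show "z \<in> X' - {(i, Suc i)}"
      using h tA[of x] tA[of y] mono_t[of x y] tt unfolding zz X'_def by simp
  qed
  have injt: "inj_on (\<lambda>(x,y). (t x, t y)) (X - {(i, Suc i)})"
  proof -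
    have "inj t" by (metis tt injI)
    then show ?thesis by (auto simp: inj_on_def dest: injD)
  qed
  have c1: "card (X' - {(i, Suc i)}) = card (X - {(i, Suc i)})"
    using img card_image[OF injt] by simp
  have pne: "p i \<noteq> p (Suc i)" using injp by (simp add: inj_eq)
  have iff: "(i, Suc i) \<in> X' \<longleftrightarrow> (i, Suc i) \<notin> X"
    using pne iA unfolding X_def X'_def by (auto simp: t_def)
  have "card X' + card X = 2 * card (X - {(i, Suc i)}) + 1"
  proof (cases "(i, Suc i) \<in> X")
    case True
    then have "card X = Suc (card (X - {(i, Suc i)}))" using card.remove[OF finX True] by simp
    moreover have "(i, Suc i) \<notin> X'" using True iff by blast
    then have "X' - {(i, Suc i)} = X'" by simp
    then have "card X' = card (X - {(i, Suc i)})" using c1 by simp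
    ultimately show ?thesis by linarith
  next
    case False
    then have e1: "X - {(i, Suc i)} = X" by simp
    have "(i, Suc i) \<in> X'" using False iff by blast
    then have "card X' = Suc (card (X' - {(i, Suc i)}))" using card.remove[OF finX'] by simp
    moreover have "card X = card (X' - {(i, Suc i)})" using c1 e1 by simp
    ultimately show ?thesis unfolding e1 by linarith
  qed
  then have "odd (card X' + card X)" by presburger
  then have "(-1::int) ^ card X' = - ((-1) ^ card X)"
    by (cases "even (card X)") (auto simp: minus_one_power_iff)
  moreover have "invs A (p \<circ> Transposition.transpose i (Suc i)) = card X'"
    unfolding invs_def X'_def t_def by simp
  moreover have "invs A p = card X" unfolding invs_def X_def by simp
  ultimately show ?thesis by simp
qed

lemma invs_adj_list:
  assumes "p permutes A" "finite A" "\<forall>x\<in>set xs. x \<in> A \<and> Suc x \<in> A"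
  shows "((-1::int) ^ invs A (p \<circ> apply_adj_transps xs)) = (-1) ^ length xs * (-1) ^ invs A p"
  using assms
proof (induction xs arbitrary: p)
  case Nil
  then show ?case by simp
next
  case (Cons x xs)
  have pp: "p \<circ> Transposition.transpose x (Suc x) permutes A"
    using Cons.prems by (intro permutes_compose permutes_swap_id) auto
  have "p \<circ> apply_adj_transps (x # xs) = (p \<circ> Transposition.transpose x (Suc x)) \<circ> apply_adj_transps xs"
    by (simp add: o_assoc)
  moreover have "((-1::int) ^ invs A ((p \<circ> Transposition.transpose x (Suc x)) \<circ> apply_adj_transps xs)) =
     (-1) ^ length xs * (-1) ^ invs A (p \<circ> Transposition.transpose x (Suc x))"
    by (rule Cons.IH[OF pp]) (use Cons.prems in auto)
  ultimately have "((-1::int) ^ invs A (p \<circ> apply_adj_transps (x # xs))) =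
     (-1) ^ length xs * (-1) ^ invs A (p \<circ> Transposition.transpose x (Suc x))"
    by simp
  also have "\<dots> = (-1) ^ length (x # xs) * (-1) ^ invs A p"
    using invs_adj[of p A x] Cons.prems by simp
  finally show ?case .
qed

lemma sign_invs:
  assumes "p permutes {1..n::nat}"
  shows "sign p = (-1) ^ invs {1..n} p"
  using finite_atLeastAtMost assms
proof (induction rule: permutes_rev_induct)
  case id
  have "{(x, y). x \<in> {1..n} \<and> y \<in> {1..n} \<and> x < y \<and> id y < id x} = {}" by auto
  then have "invs {1..n} id = 0" by (simp only: invs_def card.empty)
  then show ?case by (simp add: id_def)
next
  case (swap a b p)
  have key: "((-1::int) ^ invs {1..n} (p \<circ> Transposition.transpose a b)) = - ((-1) ^ invs {1..n} p)"
    if ab: "a < b" "a \<in> {1..n}" "b \<in> {1..n}" for a b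
  proof -
    have "(-1::int) ^ invs {1..n} (p \<circ> apply_adj_transps (adj_transp_seq a b)) =
          (-1) ^ length (adj_transp_seq a b) * (-1) ^ invs {1..n} p"
      using ab swap.hyps(4) by (intro invs_adj_list) (auto simp: set_adj_transp_seq)
    moreover have "odd (length (adj_transp_seq a b))"
      using ab by (simp add: length_adj_transp_seq)
    ultimately show ?thesis using ab by (simp add: adj_transp_seq_correct)
  qed
  have "((-1::int) ^ invs {1..n} (p \<circ> Transposition.transpose a b)) = - ((-1) ^ invs {1..n} p)"
  proof (cases "a < b")
    case True then show ?thesis using key swap by auto
  next
    case False then have "b < a" using swap by auto
    then show ?thesis using key[of b a] swap by (auto simp: transpose_commute)
  qed
  moreover have "sign (p \<circ> Transposition.transpose a b) = - sign p"
    using swap by (subst sign_compose) (auto simp: sign_swap_id permutation_permutes intro: permutes_swap_id)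
  ultimately show ?case using swap.IH by (simp only:)
qed



definition blk :: "nat set list \<Rightarrow> nat \<Rightarrow> nat" where
  "blk P x = (THE k. k < length P \<and> x \<in> P ! k)"

definition wfp :: "nat set list \<Rightarrow> bool" where
  "wfp P \<longleftrightarrow> distinct P \<and> disjoint (set P) \<and> (\<forall>I\<in>set P. finite I)"

definition off :: "nat set list \<Rightarrow> nat \<Rightarrow> nat" where
  "off P k = (\<Sum>j<k. card (P ! j))"

definition rk :: "nat set \<Rightarrow> nat \<Rightarrow> nat" where
  "rk A x = card {y \<in> A. y \<le> x}"

definition cr :: "nat set \<Rightarrow> nat set \<Rightarrow> nat" where
  "cr A B = card {(a,b). a \<in> A \<and> b \<in> B \<and> b < a}"

fun sg :: "nat set list \<Rightarrow> int" where
  "sg [] = 1"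
| "sg (I # P) = (-1) ^ cr I (\<Union>(set P)) * sg P"

definition Inv :: "nat set list \<Rightarrow> (nat \<times> nat) set" where
  "Inv P = {(x,y). x \<in> \<Union>(set P) \<and> y \<in> \<Union>(set P) \<and> x < y \<and> blk P y < blk P x}"

lemma wfp_nth_disj:
  assumes "wfp P" "k < length P" "l < length P" "k \<noteq> l"
  shows "P ! k \<inter> P ! l = {}"
proof -
  have "P ! k \<noteq> P ! l" using assms nth_eq_iff_index_eq unfolding wfp_def by blast
  moreover have "P ! k \<in> set P" "P ! l \<in> set P" using assms by auto
  ultimately show ?thesis using assms(1) unfolding wfp_def pairwise_def disjnt_def by blast
qed

lemma blk_eq:
  assumes "wfp P" "k < length P" "x \<in> P ! k"
  shows "blk P x = k"
  unfolding blk_def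
proof (rule the_equality)
  show "k < length P \<and> x \<in> P ! k" using assms by simp
  fix l assume "l < length P \<and> x \<in> P ! l"
  then show "l = k" using wfp_nth_disj[OF assms(1), of k l] assms by blast
qed

lemma blk_in:
  assumes "wfp P" "x \<in> \<Union>(set P)"
  shows "blk P x < length P" "x \<in> P ! blk P x"
proof -
  obtain k where k: "k < length P" "x \<in> P ! k" using assms(2) by (auto simp: in_set_conv_nth)
  then show "blk P x < length P" "x \<in> P ! blk P x" using blk_eq[OF assms(1) k] by auto
qed

lemma sigmaP_eq:
  assumes "x \<in> \<Union>(set P)"
  shows "sigmaP P x = off P (blk P x) + rk (P ! blk P x) x"
  using assms unfolding sigmaP_def off_def rk_def blk_def Let_def by simp

lemma off_Suc: "off P (Suc k) = off P k + card (P ! k)"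
  by (simp add: off_def)

lemma off_mono: "k \<le> l \<Longrightarrow> off P k \<le> off P l"
  unfolding off_def by (rule sum_mono2) auto

lemma rk_le: "finite A \<Longrightarrow> rk A x \<le> card A"
  unfolding rk_def by (rule card_mono) auto

lemma rk_pos: "finite A \<Longrightarrow> x \<in> A \<Longrightarrow> 0 < rk A x"
  unfolding rk_def by (subst card_gt_0_iff) auto

lemma rk_strict: 
  assumes "finite A" "y \<in> A" "x < y" shows "rk A x < rk A y"
proof -
  have "{z \<in> A. z \<le> x} \<subseteq> {z \<in> A. z \<le> y}" using assms by auto
  moreover have "y \<in> {z \<in> A. z \<le> y}" "y \<notin> {z \<in> A. z \<le> x}" using assms by auto
  ultimately have "{z \<in> A. z \<le> x} \<subset> {z \<in> A. z \<le> y}" by blast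
  moreover have "finite {z \<in> A. z \<le> y}" using assms by simp
  ultimately show ?thesis unfolding rk_def by (metis psubset_card_mono)
qed

lemma sigma_lt_blk:
  assumes "wfp P" "x \<in> \<Union>(set P)" "y \<in> \<Union>(set P)" "blk P x < blk P y"
  shows "sigmaP P x < sigmaP P y"
proof -
  let ?k = "blk P x" and ?l = "blk P y"
  have fk: "finite (P ! ?k)" using blk_in[OF assms(1,2)] assms(1) unfolding wfp_def by auto
  have fl: "finite (P ! ?l)" using blk_in[OF assms(1,3)] assms(1) unfolding wfp_def by auto
  have "sigmaP P x \<le> off P ?k + card (P ! ?k)"
    using sigmaP_eq[OF assms(2)] rk_le[OF fk, of x] by simp
  also have "\<dots> = off P (Suc ?k)" by (simp add: off_Suc)
  also have "\<dots> \<le> off P ?l" using assms(4) by (intro off_mono) simp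
  also have "\<dots> < sigmaP P y"
    using sigmaP_eq[OF assms(3)] rk_pos[OF fl blk_in(2)[OF assms(1,3)]] by simp
  finally show ?thesis .
qed

lemma sigma_lt_same:
  assumes "wfp P" "x \<in> \<Union>(set P)" "y \<in> \<Union>(set P)" "blk P x = blk P y" "x < y"
  shows "sigmaP P x < sigmaP P y"
proof -
  have fl: "finite (P ! blk P y)" using blk_in[OF assms(1,3)] assms(1) unfolding wfp_def by auto
  show ?thesis using sigmaP_eq[OF assms(2)] sigmaP_eq[OF assms(3)] assms(4)
      rk_strict[OF fl blk_in(2)[OF assms(1,3)] assms(5)] by simp
qed

lemma sigma_less_iff:
  assumes "wfp P" "x \<in> \<Union>(set P)" "y \<in> \<Union>(set P)" "x < y"
  shows "sigmaP P y < sigmaP P x \<longleftrightarrow> blk P y < blk P x"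
proof
  assume "blk P y < blk P x" then show "sigmaP P y < sigmaP P x" using sigma_lt_blk assms by blast
next
  assume h: "sigmaP P y < sigmaP P x"
  show "blk P y < blk P x"
  proof (rule ccontr)
    assume "\<not> blk P y < blk P x"
    then have "blk P x < blk P y \<or> blk P x = blk P y" by auto
    then have "sigmaP P x < sigmaP P y" using sigma_lt_blk sigma_lt_same assms by blast
    then show False using h by simp
  qed
qed

lemma total_card:
  assumes "wfp P"
  shows "off P (length P) = card (\<Union>(set P))"
proof -
  have "card (\<Union>(set P)) = sum card (set P)"
    using assms unfolding wfp_def by (intro card_Union_disjoint) auto
  also have "\<dots> = sum_list (map card P)" using assms unfolding wfp_def
    by (simp add: sum.distinct_set_conv_list)
  also have "\<dots> = off P (length P)" by (simp add: sum_list_sum_nth off_def atLeast0LessThan)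
  finally show ?thesis by simp
qed

lemma sigmaP_permutes:
  assumes "wfp P" "\<Union>(set P) = {1..n}"
  shows "sigmaP P permutes {1..n}"
proof (rule bij_imp_permutes)
  have into: "sigmaP P x \<in> {1..n}" if x: "x \<in> {1..n}" for x
  proof -
    have x': "x \<in> \<Union>(set P)" using x assms by simp
    let ?k = "blk P x"
    have fk: "finite (P ! ?k)" using blk_in[OF assms(1) x'] assms(1) unfolding wfp_def by auto
    have "sigmaP P x \<le> off P ?k + card (P ! ?k)"
      using sigmaP_eq[OF x'] rk_le[OF fk, of x] by simp
    also have "\<dots> = off P (Suc ?k)" by (simp add: off_Suc)
    also have "\<dots> \<le> off P (length P)" using blk_in(1)[OF assms(1) x'] by (intro off_mono) simp
    also have "\<dots> = n" using total_card[OF assms(1)] assms(2) by simp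
    finally have "sigmaP P x \<le> n" .
    moreover have "0 < sigmaP P x" using sigmaP_eq[OF x'] rk_pos[OF fk blk_in(2)[OF assms(1) x']] by simp
    ultimately show ?thesis by simp
  qed
  have inj: "inj_on (sigmaP P) {1..n}"
  proof (rule inj_onI)
    fix x y assume xy: "x \<in> {1..n}" "y \<in> {1..n}" "sigmaP P x = sigmaP P y"
    show "x = y"
    proof (rule ccontr)
      assume "x \<noteq> y"
      then consider "x < y" | "y < x" by linarith
      then show False
      proof cases
        case 1 then show False using sigma_less_iff[OF assms(1), of x y] sigma_less_iff[OF assms(1), of x y] xy assms(2)
            sigma_lt_blk[OF assms(1), of x y] sigma_lt_same[OF assms(1), of x y]
          by (metis less_irrefl nat_neq_iff)
      next
        case 2 then show False using sigma_lt_blk[OF assms(1), of y x] sigma_lt_same[OF assms(1), of y x]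
            sigma_lt_blk[OF assms(1), of x y] xy assms(2)
          by (metis less_irrefl nat_neq_iff)
      qed
    qed
  qed
  have "sigmaP P ` {1..n} = {1..n}" using into inj by (intro endo_inj_surj) auto
  then show "bij_betw (sigmaP P) {1..n} {1..n}" using inj by (simp add: bij_betw_def)
  fix x assume "x \<notin> {1..n}"
  then have "x \<notin> \<Union>(set P)" using assms(2) by simp
  then show "sigmaP P x = x" unfolding sigmaP_def by (rule if_not_P)
qed

lemma invs_sigmaP:
  assumes "wfp P" "\<Union>(set P) = {1..n}"
  shows "invs {1..n} (sigmaP P) = card (Inv P)"
proof -
  have "{(x,y). x \<in> {1..n} \<and> y \<in> {1..n} \<and> x < y \<and> sigmaP P y < sigmaP P x} = Inv P"
    unfolding Inv_def using sigma_less_iff[OF assms(1)] assms(2) by auto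
  then show ?thesis unfolding invs_def by simp
qed

lemma wfp_Cons: "wfp (I # Q) \<Longrightarrow> wfp Q"
  unfolding wfp_def by (auto simp: pairwise_insert)

lemma wfp_Cons_disj: "wfp (I # Q) \<Longrightarrow> I \<inter> \<Union>(set Q) = {}"
  unfolding wfp_def pairwise_def disjnt_def by auto

lemma sg_Inv:
  assumes "wfp P"
  shows "sg P = (-1) ^ card (Inv P)"
  using assms
proof (induction P)
  case Nil
  then show ?case by (simp add: Inv_def)
next
  case (Cons I Q)
  have wQ: "wfp Q" using wfp_Cons[OF Cons.prems] .
  have dis: "I \<inter> \<Union>(set Q) = {}" using wfp_Cons_disj[OF Cons.prems] .
  have fI: "finite I" and fQ: "finite (\<Union>(set Q))" using Cons.prems unfolding wfp_def by auto
  have b0: "blk (I # Q) y = 0" if "y \<in> I" for y using blk_eq[OF Cons.prems, of 0 y] that by simp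
  have bS: "blk (I # Q) y = Suc (blk Q y)" if "y \<in> \<Union>(set Q)" for y
    using blk_eq[OF Cons.prems, of "Suc (blk Q y)" y] blk_in[OF wQ that] by simp
  define A where "A = {(x,y). x \<in> \<Union>(set Q) \<and> y \<in> I \<and> x < y}"
  have split: "Inv (I # Q) = A \<union> Inv Q"
  proof (intro set_eqI iffI)
    fix z assume z: "z \<in> Inv (I # Q)"
    obtain x y where zz: "z = (x,y)" by force
    have h: "x \<in> I \<union> \<Union>(set Q)" "y \<in> I \<union> \<Union>(set Q)" "x < y" "blk (I # Q) y < blk (I # Q) x"
      using z unfolding zz Inv_def by auto
    show "z \<in> A \<union> Inv Q"
    proof (cases "y \<in> I")
      case True
      then have "x \<notin> I" using h b0 by fastforce
      then show ?thesis using h True unfolding zz A_def by auto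
    next
      case False
      then have y: "y \<in> \<Union>(set Q)" using h by auto
      then have "x \<notin> I" using h b0 bS by fastforce
      then have x: "x \<in> \<Union>(set Q)" using h by auto
      then show ?thesis using h x y bS unfolding zz Inv_def by auto
    qed
  next
    fix z assume z: "z \<in> A \<union> Inv Q"
    obtain x y where zz: "z = (x,y)" by force
    show "z \<in> Inv (I # Q)"
    proof (cases "z \<in> A")
      case True
      then have "x \<in> \<Union>(set Q)" "y \<in> I" "x < y" unfolding zz A_def by auto
      then show ?thesis using b0 bS unfolding zz Inv_def by auto
    next
      case False
      then have "x \<in> \<Union>(set Q)" "y \<in> \<Union>(set Q)" "x < y" "blk Q y < blk Q x"
        using z unfolding zz Inv_def by auto
      then show ?thesis using bS unfolding zz Inv_def by auto
    qed
  qed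
  have disA: "A \<inter> Inv Q = {}" using dis unfolding A_def Inv_def by auto
  have finA: "finite A" unfolding A_def by (rule finite_subset[of _ "\<Union>(set Q) \<times> I"]) (use fI fQ in auto)
  have finI: "finite (Inv Q)" unfolding Inv_def by (rule finite_subset[of _ "\<Union>(set Q) \<times> \<Union>(set Q)"]) (use fQ in auto)
  have cA: "card A = cr I (\<Union>(set Q))"
  proof -
    have "A = (\<lambda>(a,b). (b,a)) ` {(a,b). a \<in> I \<and> b \<in> \<Union>(set Q) \<and> b < a}"
      unfolding A_def by auto
    moreover have "inj_on (\<lambda>(a,b). (b,a)) {(a,b). a \<in> I \<and> b \<in> \<Union>(set Q) \<and> b < a}"
      by (auto simp: inj_on_def)
    ultimately show ?thesis unfolding cr_def by (simp add: card_image)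
  qed
  have "card (Inv (I # Q)) = cr I (\<Union>(set Q)) + card (Inv Q)"
    using split disA finA finI cA by (simp add: card_Un_disjoint)
  then show ?case using Cons.IH[OF wQ] by (simp add: power_add)
qed

lemma epsP_sg:
  assumes "wfp P" "\<Union>(set P) = {1..n}"
  shows "epsP P = sg P"
  unfolding epsP_def
  using sign_invs[OF sigmaP_permutes[OF assms]] invs_sigmaP[OF assms] sg_Inv[OF assms(1)] by simp



lemma cr_fin: "finite A \<Longrightarrow> finite B \<Longrightarrow> finite {(a,b). a \<in> A \<and> b \<in> B \<and> b < a}"
  by (rule finite_subset[of _ "A \<times> B"]) auto

lemma cr_Un2:
  assumes "finite A" "finite B" "finite C" "B \<inter> C = {}"
  shows "cr A (B \<union> C) = cr A B + cr A C"
proof -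
  have "{(a,b). a \<in> A \<and> b \<in> B \<union> C \<and> b < a} =
        {(a,b). a \<in> A \<and> b \<in> B \<and> b < a} \<union> {(a,b). a \<in> A \<and> b \<in> C \<and> b < a}" by auto
  moreover have "{(a,b). a \<in> A \<and> b \<in> B \<and> b < a} \<inter> {(a,b). a \<in> A \<and> b \<in> C \<and> b < a} = {}"
    using assms(4) by auto
  ultimately show ?thesis unfolding cr_def using assms by (simp add: card_Un_disjoint cr_fin)
qed

lemma cr_Un1:
  assumes "finite A" "finite B" "finite C" "A \<inter> B = {}"
  shows "cr (A \<union> B) C = cr A C + cr B C"
proof -
  have "{(a,b). a \<in> A \<union> B \<and> b \<in> C \<and> b < a} =
        {(a,b). a \<in> A \<and> b \<in> C \<and> b < a} \<union> {(a,b). a \<in> B \<and> b \<in> C \<and> b < a}" by auto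
  moreover have "{(a,b). a \<in> A \<and> b \<in> C \<and> b < a} \<inter> {(a,b). a \<in> B \<and> b \<in> C \<and> b < a} = {}"
    using assms(4) by auto
  ultimately show ?thesis unfolding cr_def using assms by (simp add: card_Un_disjoint cr_fin)
qed

lemma cr_empty2 [simp]: "cr A {} = 0" and cr_empty1 [simp]: "cr {} A = 0"
  unfolding cr_def by auto

lemma cr_swap:
  assumes "finite A" "finite B" "A \<inter> B = {}"
  shows "cr A B + cr B A = card A * card B"
proof -
  have e: "cr B A = card {(a,b). a \<in> A \<and> b \<in> B \<and> a < b}"
  proof -
    have "{(a,b). a \<in> A \<and> b \<in> B \<and> a < b} = (\<lambda>(x,y). (y,x)) ` {(b,a). b \<in> B \<and> a \<in> A \<and> a < b}"
      by auto
    moreover have "inj_on (\<lambda>(x,y). (y,x)) {(b,a). b \<in> B \<and> a \<in> A \<and> a < b}"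
      by (auto simp: inj_on_def)
    ultimately show ?thesis unfolding cr_def by (simp add: card_image)
  qed
  have "A \<times> B = {(a,b). a \<in> A \<and> b \<in> B \<and> b < a} \<union> {(a,b). a \<in> A \<and> b \<in> B \<and> a < b}"
    using assms(3) by (auto simp: linorder_neq_iff)
  moreover have "{(a,b). a \<in> A \<and> b \<in> B \<and> b < a} \<inter> {(a,b). a \<in> A \<and> b \<in> B \<and> a < b} = {}" by auto
  moreover have "finite {(a,b). a \<in> A \<and> b \<in> B \<and> a < b}"
    by (rule finite_subset[of _ "A \<times> B"]) (use assms in auto)
  ultimately have "card (A \<times> B) = cr A B + card {(a,b). a \<in> A \<and> b \<in> B \<and> a < b}"
    unfolding cr_def using card_Un_disjoint[OF cr_fin[OF assms(1,2)]] by simp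
  then have "card A * card B = cr A B + card {(a,b). a \<in> A \<and> b \<in> B \<and> a < b}"
    by (simp add: card_cartesian_product)
  then show ?thesis using e by simp
qed

lemma wfp_append:
  assumes "wfp (P @ Q)"
  shows "wfp P" "wfp Q" "\<Union>(set P) \<inter> \<Union>(set Q) = {}"
proof -
  have a: "distinct (P @ Q)" "disjoint (set (P @ Q))" "\<forall>I\<in>set (P @ Q). finite I"
    using assms unfolding wfp_def by auto
  have "disjoint (set P)" by (rule pairwise_subset[OF a(2)]) simp
  moreover have "disjoint (set Q)" by (rule pairwise_subset[OF a(2)]) simp
  ultimately show "wfp P" "wfp Q" using a unfolding wfp_def by auto
  have sPQ: "set P \<inter> set Q = {}" using assms unfolding wfp_def by auto
  have dj: "disjoint (set (P @ Q))" using assms unfolding wfp_def by blast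
  show "\<Union>(set P) \<inter> \<Union>(set Q) = {}"
  proof (rule ccontr)
    assume "\<Union>(set P) \<inter> \<Union>(set Q) \<noteq> {}"
    then obtain x X Y where "X \<in> set P" "Y \<in> set Q" "x \<in> X" "x \<in> Y" by blast
    moreover have "X \<noteq> Y" using sPQ calculation by blast
    ultimately show False using dj unfolding pairwise_def disjnt_def by auto
  qed
qed

lemma wfp_fin: "wfp P \<Longrightarrow> finite (\<Union>(set P))"
  unfolding wfp_def by auto

lemma sg_append:
  assumes "wfp (P @ Q)"
  shows "sg (P @ Q) = sg P * sg Q * (-1) ^ cr (\<Union>(set P)) (\<Union>(set Q))"
  using assms
proof (induction P)
  case Nil
  then show ?case by simp
next
  case (Cons I P)
  have w: "wfp (P @ Q)" using wfp_Cons[of I "P @ Q"] Cons.prems by simp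
  have w1: "wfp (I # P)" "wfp Q" using wfp_append[of "I # P" Q] Cons.prems by auto
  have dIP: "I \<inter> \<Union>(set P) = {}" using wfp_Cons_disj[OF w1(1)] .
  have dIQ: "I \<inter> \<Union>(set Q) = {}" using wfp_append(3)[of "I # P" Q] Cons.prems by auto
  have dPQ: "\<Union>(set P) \<inter> \<Union>(set Q) = {}" using wfp_append(3)[OF w] .
  have fI: "finite I" using w1 unfolding wfp_def by auto
  have fP: "finite (\<Union>(set P))" using wfp_fin[OF wfp_Cons[OF w1(1)]] .
  have fQ: "finite (\<Union>(set Q))" using wfp_fin[OF w1(2)] .
  have "sg ((I # P) @ Q) = (-1) ^ cr I (\<Union>(set P) \<union> \<Union>(set Q)) * sg (P @ Q)" by simp
  also have "\<dots> = (-1) ^ (cr I (\<Union>(set P)) + cr I (\<Union>(set Q))) * (sg P * sg Q * (-1) ^ cr (\<Union>(set P)) (\<Union>(set Q)))"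
    using Cons.IH[OF w] cr_Un2[OF fI fP fQ dPQ] by simp
  also have "\<dots> = sg (I # P) * sg Q * (-1) ^ cr (\<Union>(set (I # P))) (\<Union>(set Q))"
    using cr_Un1[OF fI fP fQ dIP] by (simp add: power_add)
  finally show ?case .
qed

lemma sg_single [simp]: "sg [I] = 1" by simp

lemma neg1_pow_mult_self [simp]: "((-1::int) ^ k) * ((-1) ^ k) = 1"
  by (simp add: power_add[symmetric])

lemma sg_move_front:
  assumes "wfp (Q1 @ I # Q2)"
  shows "sg (Q1 @ I # Q2) = sg (I # Q1 @ Q2) * (-1) ^ (card (\<Union>(set Q1)) * card I)"
proof -
  let ?U1 = "\<Union>(set Q1)" and ?U2 = "\<Union>(set Q2)"
  have w1: "wfp Q1" "wfp (I # Q2)" using wfp_append[OF assms] by auto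
  have d1: "?U1 \<inter> (I \<union> ?U2) = {}" using wfp_append(3)[OF assms] by simp
  have w2: "wfp Q2" using wfp_Cons[OF w1(2)] .
  have dI2: "I \<inter> ?U2 = {}" using wfp_Cons_disj[OF w1(2)] .
  have fI: "finite I" using w1 unfolding wfp_def by auto
  have f1: "finite ?U1" using wfp_fin[OF w1(1)] .
  have f2: "finite ?U2" using wfp_fin[OF w2] .
  have w12: "wfp (Q1 @ Q2)" using assms unfolding wfp_def by (auto intro: pairwise_subset)
  have d12: "?U1 \<inter> ?U2 = {}" using d1 by auto
  have d1I: "?U1 \<inter> I = {}" using d1 by auto
  have "sg (Q1 @ I # Q2) = sg Q1 * sg (I # Q2) * (-1) ^ cr ?U1 (I \<union> ?U2)"
    using sg_append[OF assms] by simp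
  also have "\<dots> = sg Q1 * ((-1) ^ cr I ?U2 * sg Q2) * (-1) ^ (cr ?U1 I + cr ?U1 ?U2)"
    using cr_Un2[OF f1 fI f2 dI2] by simp
  finally have L: "sg (Q1 @ I # Q2) = sg Q1 * ((-1) ^ cr I ?U2 * sg Q2) * (-1) ^ (cr ?U1 I + cr ?U1 ?U2)" .
  have "sg (I # Q1 @ Q2) = (-1) ^ cr I (?U1 \<union> ?U2) * sg (Q1 @ Q2)" by simp
  also have "\<dots> = (-1) ^ (cr I ?U1 + cr I ?U2) * (sg Q1 * sg Q2 * (-1) ^ cr ?U1 ?U2)"
    using cr_Un2[OF fI f1 f2 d12] sg_append[OF w12] by simp
  finally have R: "sg (I # Q1 @ Q2) = (-1) ^ (cr I ?U1 + cr I ?U2) * (sg Q1 * sg Q2 * (-1) ^ cr ?U1 ?U2)" .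
  have sw: "cr ?U1 I + cr I ?U1 = card ?U1 * card I" using cr_swap[OF f1 fI d1I] .
  have "(-1::int) ^ (card ?U1 * card I) = (-1) ^ cr ?U1 I * (-1) ^ cr I ?U1"
    using sw by (simp add: power_add[symmetric])
  then have "(-1::int) ^ cr ?U1 I = (-1) ^ cr I ?U1 * (-1) ^ (card ?U1 * card I)"
    by (metis (no_types, lifting) mult.commute mult.left_neutral mult.assoc neg1_pow_mult_self)
  then show ?thesis unfolding L R by (simp add: power_add algebra_simps)
qed



definition nodd :: "nat set set \<Rightarrow> nat" where
  "nodd p = card {I \<in> p. odd (card I)}"

lemma even_card_Union:
  assumes "wfp Q" "\<forall>J\<in>set Q. even (card J)"
  shows "even (card (\<Union>(set Q)))"
proof -
  have "card (\<Union>(set Q)) = sum card (set Q)"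
    using assms unfolding wfp_def by (intro card_Union_disjoint) auto
  moreover have "even (sum card (set Q))" using assms(2) by (intro dvd_sum) auto
  ultimately show ?thesis by simp
qed

lemma sg_indep:
  assumes "wfp P" "wfp Q" "set P = set Q" "nodd (set P) \<le> 1"
  shows "sg P = sg Q"
  using assms
proof (induction P arbitrary: Q)
  case Nil
  then show ?case by simp
next
  case (Cons I P')
  have "I \<in> set Q" using Cons.prems(3) by auto
  then obtain Q1 Q2 where Q: "Q = Q1 @ I # Q2" by (meson split_list)
  have dQ: "distinct Q" using Cons.prems(2) unfolding wfp_def by simp
  have dP: "distinct (I # P')" using Cons.prems(1) unfolding wfp_def by simp
  have wQ: "wfp (Q1 @ I # Q2)" using Cons.prems(2) Q by simp
  have sets: "set P' = set (Q1 @ Q2)"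
  proof -
    have "insert I (set P') = insert I (set (Q1 @ Q2))" using Cons.prems(3) Q by auto
    moreover have "I \<notin> set P'" using dP by simp
    moreover have "I \<notin> set (Q1 @ Q2)" using dQ Q by simp
    ultimately show ?thesis by (metis insert_ident)
  qed
  have w12: "wfp (Q1 @ Q2)"
  proof -
    have "set (Q1 @ Q2) \<subseteq> set Q" using Q by auto
    moreover have "distinct (Q1 @ Q2)" using dQ Q by simp
    ultimately show ?thesis using Cons.prems(2) unfolding wfp_def by (meson pairwise_subset subsetD)
  qed
  have wP': "wfp P'" using wfp_Cons[OF Cons.prems(1)] .
  have finP: "finite {J \<in> set (I # P'). odd (card J)}" by simp
  have nP': "nodd (set P') \<le> 1"
  proof -
    have "{J \<in> set P'. odd (card J)} \<subseteq> {J \<in> set (I # P'). odd (card J)}" by auto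
    then have "nodd (set P') \<le> nodd (set (I # P'))" unfolding nodd_def using finP by (rule card_mono[rotated])
    then show ?thesis using Cons.prems(4) by simp
  qed
  have IH: "sg P' = sg (Q1 @ Q2)" using Cons.IH[OF wP' w12 sets nP'] .
  have ev: "even (card (\<Union>(set Q1)) * card I)"
  proof (cases "even (card I)")
    case True then show ?thesis by simp
  next
    case False
    have "\<forall>J\<in>set Q1. even (card J)"
    proof
      fix J assume J: "J \<in> set Q1"
      show "even (card J)"
      proof (rule ccontr)
        assume oJ: "\<not> even (card J)"
        have "J \<noteq> I" using J dQ Q by auto
        moreover have "J \<in> set (I # P')" "I \<in> set (I # P')" using J Q Cons.prems(3) by auto
        ultimately have "{I, J} \<subseteq> {J \<in> set (I # P'). odd (card J)}" using oJ False by auto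
        then have "card {I, J} \<le> nodd (set (I # P'))" unfolding nodd_def using finP by (rule card_mono[rotated])
        then show False using \<open>J \<noteq> I\<close> Cons.prems(4) by simp
      qed
    qed
    moreover have "wfp Q1" using wfp_append(1)[OF wQ] .
    ultimately show ?thesis using even_card_Union by simp
  qed
  have "sg Q = sg (I # Q1 @ Q2)" using sg_move_front[OF wQ] ev Q by simp
  also have "\<dots> = (-1) ^ cr I (\<Union>(set (Q1 @ Q2))) * sg (Q1 @ Q2)" by simp
  also have "\<dots> = sg (I # P')" using IH sets by simp
  finally show ?case by simp
qed

definition ordl :: "nat set set \<Rightarrow> nat set list" where
  "ordl m = (SOME P. distinct P \<and> set P = m)"

definition sgm :: "nat set set \<Rightarrow> int" where
  "sgm m = sg (ordl m)"

lemma ordl: "finite m \<Longrightarrow> distinct (ordl m) \<and> set (ordl m) = m"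
  unfolding ordl_def by (rule someI_ex) (use finite_distinct_list in blast)

definition famok :: "nat set set \<Rightarrow> bool" where
  "famok m \<longleftrightarrow> finite m \<and> disjoint m \<and> (\<forall>B\<in>m. finite B)"

lemma wfp_of_famok: "famok m \<Longrightarrow> distinct P \<Longrightarrow> set P = m \<Longrightarrow> wfp P"
  unfolding famok_def wfp_def by auto

lemma sgm_eq:
  assumes "famok m" "nodd m \<le> 1" "distinct P" "set P = m"
  shows "sgm m = sg P"
proof -
  have o: "distinct (ordl m)" "set (ordl m) = m" using ordl assms(1) unfolding famok_def by auto
  show ?thesis unfolding sgm_def
    by (rule sg_indep) (use wfp_of_famok[OF assms(1) o] wfp_of_famok[OF assms(1,3,4)] o assms in auto)
qed

lemma nodd_mono: "finite m \<Longrightarrow> m' \<subseteq> m \<Longrightarrow> nodd m' \<le> nodd m"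
  unfolding nodd_def by (rule card_mono) auto

lemma famok_subset: "famok m \<Longrightarrow> m' \<subseteq> m \<Longrightarrow> famok m'"
  unfolding famok_def by (auto intro: pairwise_subset finite_subset)

lemma sgm_union:
  assumes "famok (m1 \<union> m2)" "m1 \<inter> m2 = {}" "nodd (m1 \<union> m2) \<le> 1"
  shows "sgm (m1 \<union> m2) = sgm m1 * sgm m2 * (-1) ^ cr (\<Union>m1) (\<Union>m2)"
proof -
  have f1: "famok m1" "famok m2" using famok_subset[OF assms(1)] by auto
  have fin: "finite (m1 \<union> m2)" using assms(1) unfolding famok_def by simp
  have n1: "nodd m1 \<le> 1" "nodd m2 \<le> 1" using nodd_mono[OF fin, of m1] nodd_mono[OF fin, of m2] assms(3) by auto
  define P1 where "P1 = ordl m1"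
  define P2 where "P2 = ordl m2"
  have o1: "distinct P1" "set P1 = m1" using ordl f1 unfolding famok_def P1_def by auto
  have o2: "distinct P2" "set P2 = m2" using ordl f1 unfolding famok_def P2_def by auto
  have d12: "distinct (P1 @ P2)" using o1 o2 assms(2) by auto
  have s12: "set (P1 @ P2) = m1 \<union> m2" using o1 o2 by simp
  have "sgm (m1 \<union> m2) = sg (P1 @ P2)" by (rule sgm_eq[OF assms(1) assms(3) d12 s12])
  also have "\<dots> = sg P1 * sg P2 * (-1) ^ cr (\<Union>(set P1)) (\<Union>(set P2))"
    by (rule sg_append) (rule wfp_of_famok[OF assms(1) d12 s12])
  also have "\<dots> = sgm m1 * sgm m2 * (-1) ^ cr (\<Union>m1) (\<Union>m2)"
    using sgm_eq[OF f1(1) n1(1) o1] sgm_eq[OF f1(2) n1(2) o2] o1 o2 by simp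
  finally show ?thesis .
qed

lemma sgm_empty [simp]: "sgm {} = 1"
  using sgm_eq[of "{}" "[]"] by (simp add: famok_def nodd_def)

lemma sgm_single: assumes "finite B" shows "sgm {B} = 1"
proof -
  have "nodd {B} \<le> 1" unfolding nodd_def by (rule order_trans[OF card_mono[of "{B}"]]) auto
  then show ?thesis using sgm_eq[of "{B}" "[B]"] assms by (simp add: famok_def)
qed



lemma part_union:
  assumes "partition_on A m1" "partition_on B m2" "A \<inter> B = {}"
  shows "partition_on (A \<union> B) (m1 \<union> m2)" "m1 \<inter> m2 = {}"
proof -
  have u1: "\<Union>m1 = A" and u2: "\<Union>m2 = B" using assms by (auto simp: partition_on_def)
  have d1: "disjoint m1" and d2: "disjoint m2" using assms by (auto simp: partition_on_def)
  have e1: "{} \<notin> m1" and e2: "{} \<notin> m2" using assms by (auto simp: partition_on_def)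
  show "m1 \<inter> m2 = {}"
  proof (rule ccontr)
    assume "m1 \<inter> m2 \<noteq> {}"
    then obtain X where "X \<in> m1" "X \<in> m2" by blast
    moreover then obtain x where "x \<in> X" using e1 by (metis all_not_in_conv)
    ultimately show False using u1 u2 assms(3) by blast
  qed
  show "partition_on (A \<union> B) (m1 \<union> m2)"
  proof (rule partition_onI)
    show "\<Union>(m1 \<union> m2) = A \<union> B" using u1 u2 by auto
    show "{} \<notin> m1 \<union> m2" using e1 e2 by auto
    fix p q assume pq: "p \<in> m1 \<union> m2" "q \<in> m1 \<union> m2" "p \<noteq> q"
    show "disjnt p q"
    proof (cases "p \<in> m1")
      case True
      show ?thesis
      proof (cases "q \<in> m1")
        case True then show ?thesis using \<open>p \<in> m1\<close> pq d1 by (auto simp: pairwise_def)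
      next
        case False then have "q \<in> m2" using pq by auto
        then show ?thesis using \<open>p \<in> m1\<close> u1 u2 assms(3) by (auto simp: disjnt_def)
      qed
    next
      case False then have p2: "p \<in> m2" using pq by auto
      show ?thesis
      proof (cases "q \<in> m2")
        case True then show ?thesis using p2 pq d2 by (auto simp: pairwise_def)
      next
        case False then have "q \<in> m1" using pq by auto
        then show ?thesis using p2 u1 u2 assms(3) by (auto simp: disjnt_def)
      qed
    qed
  qed
qed

lemma part_sub:
  assumes "partition_on A m" "m' \<subseteq> m"
  shows "partition_on (\<Union>m') m'" "partition_on (A - \<Union>m') (m - m')"
proof -
  have u: "\<Union>m = A" and d: "disjoint m" and e: "{} \<notin> m" using assms by (auto simp: partition_on_def)
  show "partition_on (\<Union>m') m'"
    using assms(2) d e by (auto simp: partition_on_def intro: pairwise_subset)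
  have "\<Union>(m - m') = A - \<Union>m'"
  proof (intro set_eqI iffI)
    fix x assume "x \<in> \<Union>(m - m')"
    then obtain X where X: "X \<in> m" "X \<notin> m'" "x \<in> X" by blast
    have "x \<notin> \<Union>m'"
    proof
      assume "x \<in> \<Union>m'"
      then obtain Y where "Y \<in> m'" "x \<in> Y" by blast
      moreover then have "Y \<in> m" "X \<noteq> Y" using assms(2) X by auto
      ultimately show False using d X unfolding pairwise_def disjnt_def by blast
    qed
    then show "x \<in> A - \<Union>m'" using X u by blast
  next
    fix x assume "x \<in> A - \<Union>m'"
    then show "x \<in> \<Union>(m - m')" using u by blast
  qed
  then show "partition_on (A - \<Union>m') (m - m')"
    using d e by (auto simp: partition_on_def intro: pairwise_subset)
qed

lemma part_famok: "partition_on A m \<Longrightarrow> finite A \<Longrightarrow> famok m"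
  unfolding famok_def partition_on_def
  by (auto intro: finite_UnionD rev_finite_subset[of A])

lemma nodd_union: "finite m1 \<Longrightarrow> finite m2 \<Longrightarrow> m1 \<inter> m2 = {} \<Longrightarrow> nodd (m1 \<union> m2) = nodd m1 + nodd m2"
  unfolding nodd_def by (subst card_Un_disjoint[symmetric]) (auto intro: arg_cong[where f=card])

lemma nodd_single: "nodd {B} = (if odd (card B) then 1 else 0)"
proof -
  have "{I \<in> {B}. odd (card I)} = (if odd (card B) then {B} else {})" by auto
  then show ?thesis unfolding nodd_def by simp
qed

lemma alt_sum:
  "finite (X::nat set) \<Longrightarrow> (\<Sum>b\<in>X. (-1::int) ^ card {c \<in> X. c < b}) = (if odd (card X) then 1 else 0)"
proof (induction X rule: finite_linorder_max_induct)
  case empty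
  then show ?case by simp
next
  case (insert b A)
  have bA: "b \<notin> A" using insert by auto
  have e1: "{c \<in> insert b A. c < b} = A" using insert by auto
  have e2: "{c \<in> insert b A. c < x} = {c \<in> A. c < x}" if "x \<in> A" for x using insert that by auto
  have "(\<Sum>x\<in>insert b A. (-1::int) ^ card {c \<in> insert b A. c < x}) =
        (-1) ^ card A + (\<Sum>x\<in>A. (-1::int) ^ card {c \<in> insert b A. c < x})"
    using insert bA e1 by (simp add: sum.insert)
  also have "(\<Sum>x\<in>A. (-1::int) ^ card {c \<in> insert b A. c < x}) = (\<Sum>x\<in>A. (-1::int) ^ card {c \<in> A. c < x})"
    using e2 by (intro sum.cong) auto
  finally show ?case using insert.IH insert bA by auto
qed

definition bo :: "nat set \<Rightarrow> nat" where
  "bo I = (if odd (card I) then 1 else 0)"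

definition Mset :: "nat \<Rightarrow> nat set \<Rightarrow> nat set set set" where
  "Mset j I = {m. partition_on I m \<and> (\<forall>B\<in>m. card B \<le> 2) \<and> nodd m = j}"

lemma Mset_finite: "finite I \<Longrightarrow> finite (Mset j I)"
  by (rule finite_subset[of _ "Pow (Pow I)"]) (auto simp: Mset_def partition_on_def)



lemma pf:
  assumes "finite I"
  shows "(\<Sum>m\<in>Mset (bo I) I. sgm m) = 1"
  using assms
proof (induction "card I" arbitrary: I rule: less_induct)
  case less
  show ?case
  proof (cases "I = {}")
    case True
    have "Mset (bo I) I = {{}}" using True
      by (auto simp: Mset_def partition_on_empty bo_def nodd_def)
    then show ?thesis by simp
  next
    case False
    define a where "a = Min I"
    have aI: "a \<in> I" using False less.prems unfolding a_def by simp
    have amin: "\<And>c. c \<in> I \<Longrightarrow> a \<le> c" using less.prems unfolding a_def by simp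
    define Bs where "Bs = (\<lambda>b. {a,b}) ` (I - {a}) \<union> (if odd (card I) then {{a}} else {})"
    define F where "F B = {m \<in> Mset (bo I) I. B \<in> m}" for B
    have BsI: "B \<subseteq> I" "a \<in> B" "B \<noteq> {}" "card B \<le> 2" "finite B" if "B \<in> Bs" for B
      using that aI unfolding Bs_def by (auto split: if_splits simp: card_insert_if)
    have boB: "bo (I - B) + (if odd (card B) then 1 else 0) = bo I" if "B \<in> Bs" for B
    proof -
      have cI: "card (I - B) = card I - card B" using BsI[OF that] less.prems by (simp add: card_Diff_subset)
      have "card B \<le> card I" using BsI[OF that] less.prems by (simp add: card_mono)
      moreover have "(card B = 1 \<and> odd (card I)) \<or> card B = 2"
        using that aI unfolding Bs_def by (auto split: if_splits simp: card_insert_if)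
      ultimately show ?thesis unfolding bo_def cI by auto
    qed
    have finI: "finite (Mset j I')" if "finite I'" for j I' using Mset_finite[OF that] .
    have cover: "Mset (bo I) I = (\<Union>B\<in>Bs. F B)"
    proof (intro set_eqI iffI)
      fix m assume m: "m \<in> Mset (bo I) I"
      have pm: "partition_on I m" and c2: "\<forall>B\<in>m. card B \<le> 2" and nm: "nodd m = bo I"
        using m by (auto simp: Mset_def)
      obtain B where B: "B \<in> m" "a \<in> B" using pm aI unfolding partition_on_def by blast
      have BI: "B \<subseteq> I" using pm B unfolding partition_on_def by blast
      have fB: "finite B" using BI less.prems finite_subset by blast
      have fm: "finite m" using part_famok[OF pm less.prems] unfolding famok_def by simp
      have "B \<in> Bs"
      proof (cases "B = {a}")
        case True
        have "{a} \<in> {J \<in> m. odd (card J)}" using True B by simp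
        then have "nodd m \<noteq> 0" unfolding nodd_def using fm by (metis (no_types, lifting) card_0_eq empty_iff finite_subset mem_Collect_eq subsetI)
        then have "odd (card I)" using nm unfolding bo_def by (simp split: if_splits)
        then show ?thesis unfolding Bs_def using True by simp
      next
        case False
        then obtain b where b: "b \<in> B" "b \<noteq> a" using B by blast
        have "{a,b} \<subseteq> B" using B b by simp
        moreover have "card {a,b} = 2" using b by simp
        moreover have "card B \<le> 2" using c2 B by simp
        ultimately have "{a,b} = B" using fB by (metis card_mono card_subset_eq order_antisym)
        then show ?thesis unfolding Bs_def using b BI by auto
      qed
      then show "m \<in> (\<Union>B\<in>Bs. F B)" unfolding F_def using m B by blast
    next
      fix m assume "m \<in> (\<Union>B\<in>Bs. F B)"
      then show "m \<in> Mset (bo I) I" unfolding F_def by blast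
    qed
    have disj: "\<forall>B1\<in>Bs. \<forall>B2\<in>Bs. B1 \<noteq> B2 \<longrightarrow> F B1 \<inter> F B2 = {}"
    proof (intro ballI impI)
      fix B1 B2 assume h: "B1 \<in> Bs" "B2 \<in> Bs" "B1 \<noteq> B2"
      show "F B1 \<inter> F B2 = {}"
      proof (rule ccontr)
        assume "F B1 \<inter> F B2 \<noteq> {}"
        then obtain m where "m \<in> Mset (bo I) I" "B1 \<in> m" "B2 \<in> m" unfolding F_def by blast
        then have "disjnt B1 B2" using h unfolding Mset_def partition_on_def pairwise_def by blast
        then show False using BsI(2)[OF h(1)] BsI(2)[OF h(2)] unfolding disjnt_def by blast
      qed
    qed
    have finBs: "finite Bs" unfolding Bs_def using less.prems by simp
    have finF: "\<forall>B\<in>Bs. finite (F B)" unfolding F_def using finI[OF less.prems] by auto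
    have inner: "sum sgm (F B) = (-1) ^ cr B (I - B)" if BB: "B \<in> Bs" for B
    proof -
      let ?I' = "I - B"
      have ltc: "card ?I' < card I"
      proof (rule psubset_card_mono)
        show "finite I" using less.prems .
        have "a \<in> I" "a \<notin> ?I'" using BsI[OF BB] aI by auto
        then show "?I' \<subset> I" by blast
      qed
      have fI': "finite ?I'" using less.prems by simp
      have IH: "(\<Sum>m\<in>Mset (bo ?I') ?I'. sgm m) = 1" using less.hyps[OF ltc fI'] .
      have pB: "partition_on B {B}" using BsI(3)[OF BB] by (rule partition_on_space)
      have BI: "B \<union> ?I' = I" using BsI(1)[OF BB] by auto
      have "(\<Sum>m'\<in>Mset (bo ?I') ?I'. (-1) ^ cr B ?I' * sgm m') = sum sgm (F B)"
      proof (rule sum.reindex_bij_witness[where j = "insert B" and i = "\<lambda>m. m - {B}"])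
        fix m' assume m': "m' \<in> Mset (bo ?I') ?I'"
        have pm': "partition_on ?I' m'" using m' by (simp add: Mset_def)
        have u: "partition_on (B \<union> ?I') ({B} \<union> m')" "{B} \<inter> m' = {}"
          using part_union[OF pB pm'] by auto
        then show "insert B m' - {B} = m'" by auto
        have fm': "finite m'" using part_famok[OF pm' fI'] unfolding famok_def by simp
        have nn: "nodd ({B} \<union> m') = bo I"
          using nodd_union[of "{B}" m'] fm' u(2) m' boB[OF BB] by (simp add: nodd_single Mset_def)
        show "insert B m' \<in> F B"
          using u BI m' BsI(4)[OF BB] nn unfolding F_def Mset_def by auto
        have fam: "famok ({B} \<union> m')" using part_famok[OF u(1)] BI less.prems BsI(5)[OF BB] by simp
        have "sgm ({B} \<union> m') = sgm {B} * sgm m' * (-1) ^ cr (\<Union>{B}) (\<Union>m')"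
          by (rule sgm_union[OF fam u(2)]) (use nn in \<open>simp add: bo_def\<close>)
        then show "sgm (insert B m') = (-1) ^ cr B ?I' * sgm m'"
          using sgm_single[OF BsI(5)[OF BB]] pm' by (simp add: partition_on_def)
      next
        fix m assume m: "m \<in> F B"
        then show "insert B (m - {B}) = m" unfolding F_def by auto
        have pm: "partition_on I m" and Bm: "B \<in> m" and c2: "\<forall>B\<in>m. card B \<le> 2" and nm: "nodd m = bo I"
          using m by (auto simp: F_def Mset_def)
        have p': "partition_on ?I' (m - {B})" using part_sub(2)[OF pm, of "{B}"] Bm by simp
        have fm: "finite m" using part_famok[OF pm less.prems] unfolding famok_def by simp
        have "nodd m = nodd {B} + nodd (m - {B})"
          using nodd_union[of "{B}" "m - {B}"] fm Bm by (simp add: insert_absorb)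
        then have "nodd (m - {B}) = bo ?I'" using nm boB[OF BB] by (simp add: nodd_single)
        then show "m - {B} \<in> Mset (bo ?I') ?I'" using p' c2 by (simp add: Mset_def)
      qed
      moreover have "(\<Sum>m'\<in>Mset (bo ?I') ?I'. (-1) ^ cr B ?I' * sgm m') = (-1) ^ cr B ?I' * (\<Sum>m'\<in>Mset (bo ?I') ?I'. sgm m')" by (simp add: sum_distrib_left)
      ultimately show ?thesis using IH by simp
    qed
    have "(\<Sum>m\<in>Mset (bo I) I. sgm m) = (\<Sum>B\<in>Bs. sum sgm (F B))"
      unfolding cover by (rule sum.UNION_disjoint[OF finBs finF disj])
    also have "\<dots> = (\<Sum>B\<in>Bs. (-1) ^ cr B (I - B))" using inner by (intro sum.cong) auto
    also have "\<dots> = 1"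
    proof -
      define P2 where "P2 = (\<lambda>b. {a,b}) ` (I - {a})"
      define S1 where "S1 = (if odd (card I) then {{a}} else ({} :: nat set set))"
      have dPS: "P2 \<inter> S1 = {}" unfolding P2_def S1_def by auto
      have fP2: "finite P2" "finite S1" unfolding P2_def S1_def using less.prems by auto
      have inj: "inj_on (\<lambda>b. {a,b}) (I - {a})" by (auto simp: inj_on_def doubleton_eq_iff)
      have crb: "cr {a,b} (I - {a,b}) = card {c \<in> I - {a}. c < b}" if b: "b \<in> I - {a}" for b
      proof -
        have "{(x,c). x \<in> {a,b} \<and> c \<in> I - {a,b} \<and> c < x} = (\<lambda>c. (b,c)) ` {c \<in> I - {a}. c < b}"
          using amin b by force
        moreover have "inj_on (\<lambda>c. (b,c)) {c \<in> I - {a}. c < b}" by (auto simp: inj_on_def)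
        ultimately show ?thesis unfolding cr_def by (simp add: card_image)
      qed
      have "(\<Sum>B\<in>P2. (-1::int) ^ cr B (I - B)) = (\<Sum>b\<in>I - {a}. (-1) ^ cr {a,b} (I - {a,b}))"
        unfolding P2_def by (subst sum.reindex[OF inj]) simp
      also have "\<dots> = (\<Sum>b\<in>I - {a}. (-1) ^ card {c \<in> I - {a}. c < b})"
        using crb by (intro sum.cong) auto
      also have "\<dots> = (if odd (card (I - {a})) then 1 else 0)" using alt_sum[of "I - {a}"] less.prems by simp
      finally have s2: "(\<Sum>B\<in>P2. (-1::int) ^ cr B (I - B)) = (if odd (card (I - {a})) then 1 else 0)" .
      have "{(x,c). x \<in> {a} \<and> c \<in> I - {a} \<and> c < x} = {}" using amin by (auto simp: not_less)
      then have cra: "cr {a} (I - {a}) = 0" unfolding cr_def by (simp only: card.empty)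
      have s1: "(\<Sum>B\<in>S1. (-1::int) ^ cr B (I - B)) = (if odd (card I) then 1 else 0)"
        unfolding S1_def using cra by simp
      have "Bs = P2 \<union> S1" unfolding Bs_def P2_def S1_def by simp
      then have "(\<Sum>B\<in>Bs. (-1::int) ^ cr B (I - B)) = (if odd (card (I - {a})) then 1 else 0) + (if odd (card I) then 1 else 0)"
        using sum.union_disjoint[OF fP2 dPS, of "\<lambda>B. (-1::int) ^ cr B (I - B)"] s1 s2 by simp
      moreover have "card (I - {a}) = card I - 1" using aI less.prems by simp
      moreover have "card I \<ge> 1" using aI less.prems by (metis One_nat_def Suc_leI card_gt_0_iff empty_iff)
      ultimately show ?thesis by auto
    qed
    finally show ?thesis .
  qed
qed



definition Mpos :: "(nat \<Rightarrow> real) \<Rightarrow> nat \<Rightarrow> nat set \<Rightarrow> nat set set set" where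
  "Mpos lam j T = {m \<in> Mset j T. \<forall>B\<in>m. sJ B lam > 0}"

definition Eg :: "(nat \<Rightarrow> real) \<Rightarrow> nat \<Rightarrow> nat set \<Rightarrow> int" where
  "Eg lam j T = (-1) ^ card T * (\<Sum>m\<in>Mpos lam j T. sgm m)"

definition eps1 :: "nat set \<Rightarrow> int" where
  "eps1 I = (-1) ^ (card I * (card I - 1) div 2)"

lemma nodd_sum: "finite m \<Longrightarrow> nodd m = (\<Sum>B\<in>m. if odd (card B) then 1 else 0)"
proof -
  assume f: "finite m"
  have "{I \<in> m. odd (card I)} = m \<inter> {B. odd (card B)}" by auto
  then show ?thesis unfolding nodd_def using f by (simp add: sum.If_cases)
qed

lemma card_m2:
  assumes "partition_on I m" "\<forall>B\<in>m. card B \<le> 2" "finite I"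
  shows "card I + nodd m = 2 * card m"
proof -
  have fa: "famok m" using part_famok[OF assms(1,3)] .
  then have fm: "finite m" and fb: "\<forall>B\<in>m. finite B" and dm: "disjoint m" unfolding famok_def by auto
  have ne: "{} \<notin> m" and u: "\<Union>m = I" using assms(1) unfolding partition_on_def by auto
  have "card I = sum card m" using card_Union_disjoint[OF dm] fb u by auto
  moreover have "nodd m = (\<Sum>B\<in>m. if odd (card B) then 1 else 0)" using nodd_sum[OF fm] .
  ultimately have "card I + nodd m = (\<Sum>B\<in>m. card B + (if odd (card B) then 1 else 0))"
    by (simp add: sum.distrib)
  also have "\<dots> = (\<Sum>B\<in>m. 2)"
  proof (rule sum.cong)
    fix B assume B: "B \<in> m"
    have "card B \<noteq> 0" using B ne fb by auto
    moreover have "card B \<le> 2" using assms(2) B by simp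
    ultimately have "card B = 1 \<or> card B = 2" by auto
    then show "card B + (if odd (card B) then 1 else 0) = 2" by auto
  qed simp
  finally show ?thesis by simp
qed

lemma eps_par:
  assumes "c + b = 2 * q" "b \<le> (1::nat)"
  shows "(-1::int) ^ (c * (c - 1) div 2) * (-1) ^ c = (-1) ^ q"
proof (cases "b = 0")
  case True
  then have c: "c = 2 * q" using assms by simp
  have "c * (c - 1) div 2 = q * (2 * q - 1)" unfolding c by simp
  moreover have "even (q * (2 * q - 1) + c + q)"
  proof -
    have "q * (2 * q - 1) + c + q = 2 * (q * q) + 2 * q" unfolding c
      by (cases q) (simp_all add: algebra_simps)
    then show ?thesis by simp
  qed
  ultimately have "even (c * (c - 1) div 2 + c + q)" by simp
  then have "(-1::int) ^ (c * (c - 1) div 2 + c) = (-1) ^ q"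
    by (metis add.commute neg_one_even_power neg_one_odd_power odd_add power_add mult_minus1 mult_1 minus_minus)
  then show ?thesis by (simp add: power_add)
next
  case False
  then have b: "b = 1" using assms by simp
  then obtain r where q: "q = r + 1" using assms by (cases q) auto
  then have c: "c = 2 * r + 1" using assms b by simp
  have "c * (c - 1) div 2 = (2 * r + 1) * r" unfolding c by simp
  moreover have "(2 * r + 1) * r + c + q = 2 * (r * r + 2 * r + 1)" unfolding c q by (simp add: algebra_simps)
  ultimately have "c * (c - 1) div 2 + c + q = 2 * (r * r + 2 * r + 1)" by linarith
  then have "even (c * (c - 1) div 2 + c + q)" by simp
  then have "(-1::int) ^ (c * (c - 1) div 2 + c) = (-1) ^ q"
    by (metis add.commute neg_one_even_power neg_one_odd_power odd_add power_add mult_minus1 mult_1 minus_minus)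
  then show ?thesis by (simp add: power_add)
qed

lemma eps_expand:
  assumes "finite S" "I \<subseteq> S"
  shows "eps1 I * (-1) ^ card (S - I) = (-1) ^ card S * (\<Sum>m2\<in>Mset (bo I) I. (-1) ^ card m2 * sgm m2)"
proof -
  have fI: "finite I" using assms finite_subset by blast
  define q where "q = (card I + bo I) div 2"
  have cq: "card m2 = q" if "m2 \<in> Mset (bo I) I" for m2
    using card_m2[of I m2] that fI unfolding Mset_def q_def by auto
  have "(\<Sum>m2\<in>Mset (bo I) I. (-1::int) ^ card m2 * sgm m2) = (\<Sum>m2\<in>Mset (bo I) I. (-1) ^ q * sgm m2)"
    using cq by (intro sum.cong) auto
  also have "\<dots> = (-1) ^ q" using pf[OF fI] by (simp add: sum_distrib_left[symmetric])
  finally have R: "(\<Sum>m2\<in>Mset (bo I) I. (-1::int) ^ card m2 * sgm m2) = (-1) ^ q" .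
  have par: "(-1::int) ^ (card I * (card I - 1) div 2) * (-1) ^ card I = (-1) ^ q"
  proof (rule eps_par)
    show "bo I \<le> 1" by (simp add: bo_def)
    show "card I + bo I = 2 * q" unfolding q_def bo_def by auto
  qed
  have cS: "card S = card (S - I) + card I" using assms fI by (simp add: card_Diff_subset card_mono)
  have "(-1::int) ^ card S * (-1) ^ q = (-1) ^ card (S - I) * ((-1) ^ card I * (-1) ^ q)"
    unfolding cS by (simp add: power_add)
  also have "(-1::int) ^ card I * (-1) ^ q = (-1) ^ (card I * (card I - 1) div 2)"
    using par by (metis (no_types, lifting) mult.assoc mult.commute mult.right_neutral neg1_pow_mult_self)
  finally show ?thesis unfolding R eps1_def by simp
qed



lemma fin_part: fixes A :: "nat set" assumes "partition_on A m" "finite A" shows "finite m"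
  using part_famok[OF assms] unfolding famok_def by simp

lemma glue:
  assumes "finite S" "I \<subseteq> S" "bo I \<le> k" "m2 \<in> Mset (bo I) I" "m1 \<in> Mset (k - bo I) (S - I)"
  shows "m1 \<union> m2 \<in> Mset k S" "m1 \<inter> m2 = {}"
proof -
  have p2: "partition_on I m2" and p1: "partition_on (S - I) m1" using assms(4,5) by (auto simp: Mset_def)
  have u: "partition_on ((S - I) \<union> I) (m1 \<union> m2)" "m1 \<inter> m2 = {}" using part_union[OF p1 p2] by auto
  then show "m1 \<inter> m2 = {}" by simp
  have fI: "finite I" using assms finite_subset by blast
  have "nodd (m1 \<union> m2) = nodd m1 + nodd m2"
    by (rule nodd_union) (use fin_part[OF p1] fin_part[OF p2 fI] assms(1) u in auto)
  also have "\<dots> = k" using assms(3-5) by (simp add: Mset_def)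
  finally have "nodd (m1 \<union> m2) = k" .
  moreover have "(S - I) \<union> I = S" using assms(2) by auto
  ultimately show "m1 \<union> m2 \<in> Mset k S" using u assms(4,5) by (auto simp: Mset_def)
qed

lemma split_back:
  assumes "finite S" "m \<in> Mset k S" "m2 \<subseteq> m" "k \<le> 1"
  shows "\<Union>m2 \<subseteq> S" "bo (\<Union>m2) = nodd m2" "bo (\<Union>m2) \<le> k"
    "m2 \<in> Mset (bo (\<Union>m2)) (\<Union>m2)" "m - m2 \<in> Mset (k - bo (\<Union>m2)) (S - \<Union>m2)"
proof -
  have pm: "partition_on S m" and c2: "\<forall>B\<in>m. card B \<le> 2" and nm: "nodd m = k"
    using assms(2) by (auto simp: Mset_def)
  show sub: "\<Union>m2 \<subseteq> S" using pm assms(3) unfolding partition_on_def by auto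
  have fm: "finite m" using fin_part[OF pm assms(1)] .
  have p2: "partition_on (\<Union>m2) m2" and p1: "partition_on (S - \<Union>m2) (m - m2)"
    using part_sub[OF pm assms(3)] by auto
  have fU: "finite (\<Union>m2)" using sub assms(1) finite_subset by blast
  have cm: "card (\<Union>m2) + nodd m2 = 2 * card m2"
    by (rule card_m2[OF p2]) (use c2 assms(3) fU in auto)
  have n2: "nodd m2 \<le> k" using nodd_mono[OF fm assms(3)] nm by simp
  show bo: "bo (\<Union>m2) = nodd m2"
  proof (cases "nodd m2 = 0")
    case True then show ?thesis using cm unfolding bo_def by presburger
  next
    case False then have "nodd m2 = 1" using n2 assms(4) by simp
    then show ?thesis using cm unfolding bo_def by presburger
  qed
  show "bo (\<Union>m2) \<le> k" using bo n2 by simp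
  show "m2 \<in> Mset (bo (\<Union>m2)) (\<Union>m2)" using p2 c2 assms(3) bo by (auto simp: Mset_def)
  have "m = m2 \<union> (m - m2)" using assms(3) by auto
  then have "nodd m = nodd m2 + nodd (m - m2)"
    using nodd_union[of m2 "m - m2"] fm assms(3) finite_subset by (metis Diff_disjoint finite_Diff)
  then have "nodd (m - m2) = k - bo (\<Union>m2)" using nm bo by simp
  then show "m - m2 \<in> Mset (k - bo (\<Union>m2)) (S - \<Union>m2)" using p1 c2 by (auto simp: Mset_def)
qed

lemma sJ_part:
  assumes "partition_on S m" "finite S"
  shows "sJ S lam = (\<Sum>B\<in>m. sJ B lam)"
proof -
  have fa: "famok m" using part_famok[OF assms] .
  have "S = \<Union>m" using assms unfolding partition_on_def by simp
  then have "sJ S lam = sum lam (\<Union>m)" unfolding sJ_def by simp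
  also have "\<dots> = (\<Sum>B\<in>m. sum lam B)"
  proof -
    have "\<forall>A\<in>m. finite A" "\<forall>A\<in>m. \<forall>B\<in>m. A \<noteq> B \<longrightarrow> A \<inter> B = {}"
      using fa unfolding famok_def pairwise_def disjnt_def by auto
    from sum.Union_disjoint[OF this] show ?thesis by simp
  qed
  finally show ?thesis unfolding sJ_def .
qed

lemma inner_zero:
  assumes "m \<in> Mset k S" "finite S" "sJ S lam > 0"
  shows "(\<Sum>m2\<in>{m2. m2 \<subseteq> m \<and> (\<forall>B\<in>m - m2. sJ B lam > 0)}. (-1::int) ^ card m2) = 0"
proof -
  have pm: "partition_on S m" using assms by (simp add: Mset_def)
  have fm: "finite m" using fin_part[OF pm assms(2)] .
  have "\<exists>B0\<in>m. sJ B0 lam > 0"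
  proof (rule ccontr)
    assume "\<not> (\<exists>B0\<in>m. sJ B0 lam > 0)"
    then have "\<forall>B\<in>m. sJ B lam \<le> 0" by (meson not_le)
    then have "(\<Sum>B\<in>m. sJ B lam) \<le> 0" by (intro sum_nonpos) auto
    then show False using sJ_part[OF pm assms(2), of lam] assms(3) by simp
  qed
  then obtain B0 where B0: "B0 \<in> m" "sJ B0 lam > 0" by blast
  define X where "X = {m2. m2 \<subseteq> m \<and> (\<forall>B\<in>m - m2. sJ B lam > 0)}"
  define X1 where "X1 = {m2 \<in> X. B0 \<notin> m2}"
  define X2 where "X2 = {m2 \<in> X. B0 \<in> m2}"
  have finX: "finite X" unfolding X_def by (rule finite_subset[of _ "Pow m"]) (use fm in auto)
  have XX: "X = X1 \<union> X2" "X1 \<inter> X2 = {}" unfolding X1_def X2_def by auto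
  have fX: "finite X1" "finite X2" using finX unfolding X1_def X2_def by auto
  have "(\<Sum>m2\<in>X1. - ((-1::int) ^ card m2)) = (\<Sum>m2\<in>X2. (-1::int) ^ card m2)"
  proof (rule sum.reindex_bij_witness[where j = "insert B0" and i = "\<lambda>m2. m2 - {B0}"])
    fix a assume a: "a \<in> X1"
    then show "insert B0 a - {B0} = a" unfolding X1_def by auto
    show "insert B0 a \<in> X2" using a B0 unfolding X1_def X2_def X_def by auto
    have "finite a" using a fm unfolding X1_def X_def by (auto intro: finite_subset)
    then show "(-1::int) ^ card (insert B0 a) = - ((-1) ^ card a)" using a unfolding X1_def by simp
  next
    fix b assume b: "b \<in> X2"
    then show "insert B0 (b - {B0}) = b" unfolding X2_def by auto
    show "b - {B0} \<in> X1" using b B0 unfolding X1_def X2_def X_def by auto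
  qed
  then have "(\<Sum>m2\<in>X2. (-1::int) ^ card m2) = - (\<Sum>m2\<in>X1. (-1::int) ^ card m2)"
    by (simp add: sum_negf)
  then have "(\<Sum>m2\<in>X. (-1::int) ^ card m2) = 0"
    unfolding XX(1) using sum.union_disjoint[OF fX XX(2), of "\<lambda>m2. (-1::int) ^ card m2"] by simp
  then show ?thesis unfolding X_def .
qed



lemma key:
  assumes fS: "finite S" and k: "k \<le> 1" and pos: "sJ S lam > 0"
  shows "(\<Sum>I\<in>{I. I \<subseteq> S \<and> bo I \<le> k}. (-1::int) ^ cr (S - I) I * eps1 I * Eg lam (k - bo I) (S - I)) = 0"
proof -
  define A where "A = {I. I \<subseteq> S \<and> bo I \<le> k}"
  define M2 where "M2 I = Mset (bo I) I" for I
  define M1 where "M1 I = Mpos lam (k - bo I) (S - I)" for I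
  define f where "f p = (-1::int) ^ card (fst p) * sgm (snd p \<union> fst p)" for p :: "nat set set \<times> nat set set"
  define X where "X m = {m2. m2 \<subseteq> m \<and> (\<forall>B\<in>m - m2. sJ B lam > 0)}" for m
  have finA: "finite A" unfolding A_def by (rule finite_subset[of _ "Pow S"]) (use fS in auto)
  have finM: "\<forall>I\<in>A. finite (M2 I \<times> M1 I)"
  proof
    fix I assume "I \<in> A"
    then have "finite I" using fS unfolding A_def by (auto intro: finite_subset)
    moreover have "finite (M1 I)" unfolding M1_def Mpos_def using Mset_finite[of "S - I"] fS by simp
    ultimately show "finite (M2 I \<times> M1 I)" unfolding M2_def using Mset_finite by simp
  qed
  have step1: "(-1::int) ^ cr (S - I) I * eps1 I * Eg lam (k - bo I) (S - I) = (-1) ^ card S * (\<Sum>p\<in>M2 I \<times> M1 I. f p)"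
    if I: "I \<in> A" for I
  proof -
    have IS: "I \<subseteq> S" and bI: "bo I \<le> k" using I unfolding A_def by auto
    have trm: "(-1::int) ^ cr (S - I) I * ((-1) ^ card m2 * sgm m2) * sgm m1 = f (m2, m1)"
      if m2: "m2 \<in> M2 I" and m1: "m1 \<in> M1 I" for m2 m1
    proof -
      have m1': "m1 \<in> Mset (k - bo I) (S - I)" using m1 unfolding M1_def Mpos_def by simp
      have m2': "m2 \<in> Mset (bo I) I" using m2 unfolding M2_def by simp
      have g: "m1 \<union> m2 \<in> Mset k S" "m1 \<inter> m2 = {}" using glue[OF fS IS bI m2' m1'] by auto
      have fam: "famok (m1 \<union> m2)" using part_famok[of S "m1 \<union> m2"] g fS by (simp add: Mset_def)
      have nn: "nodd (m1 \<union> m2) \<le> 1" using g k by (simp add: Mset_def)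
      have u1: "\<Union>m1 = S - I" and u2: "\<Union>m2 = I" using m1' m2' by (auto simp: Mset_def partition_on_def)
      have "sgm (m1 \<union> m2) = sgm m1 * sgm m2 * (-1) ^ cr (S - I) I"
        using sgm_union[OF fam g(2) nn] u1 u2 by simp
      then show ?thesis unfolding f_def by simp
    qed
    have "(-1::int) ^ cr (S - I) I * eps1 I * Eg lam (k - bo I) (S - I) =
          (-1) ^ cr (S - I) I * (eps1 I * (-1) ^ card (S - I)) * (\<Sum>m1\<in>M1 I. sgm m1)"
      unfolding Eg_def M1_def by (simp add: algebra_simps)
    also have "\<dots> = (-1) ^ cr (S - I) I * ((-1) ^ card S * (\<Sum>m2\<in>M2 I. (-1) ^ card m2 * sgm m2)) * (\<Sum>m1\<in>M1 I. sgm m1)"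
      unfolding M2_def using eps_expand[OF fS IS] by simp
    also have "\<dots> = (-1) ^ card S * (\<Sum>m2\<in>M2 I. \<Sum>m1\<in>M1 I. (-1) ^ cr (S - I) I * ((-1) ^ card m2 * sgm m2) * sgm m1)"
      by (simp add: sum_product sum_distrib_left sum_distrib_right algebra_simps)
    also have "\<dots> = (-1) ^ card S * (\<Sum>m2\<in>M2 I. \<Sum>m1\<in>M1 I. f (m2, m1))"
      using trm by (intro arg_cong[where f = "\<lambda>x. (-1) ^ card S * x"] sum.cong) auto
    also have "\<dots> = (-1) ^ card S * (\<Sum>p\<in>M2 I \<times> M1 I. f p)"
      by (simp add: sum.cartesian_product)
    finally show ?thesis .
  qed
  have "(\<Sum>I\<in>A. (-1::int) ^ cr (S - I) I * eps1 I * Eg lam (k - bo I) (S - I)) =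
        (\<Sum>I\<in>A. (-1) ^ card S * (\<Sum>p\<in>M2 I \<times> M1 I. f p))"
    using step1 by (intro sum.cong) auto
  also have "\<dots> = (-1) ^ card S * (\<Sum>I\<in>A. \<Sum>p\<in>M2 I \<times> M1 I. f p)"
    by (simp add: sum_distrib_left)
  also have "(\<Sum>I\<in>A. \<Sum>p\<in>M2 I \<times> M1 I. f p) = (\<Sum>(I,p)\<in>Sigma A (\<lambda>I. M2 I \<times> M1 I). f p)"
    by (rule sum.Sigma[OF finA finM])
  also have "\<dots> = (\<Sum>(m,m2)\<in>Sigma (Mset k S) X. (-1) ^ card m2 * sgm m)"
  proof (rule sum.reindex_bij_witness[where j = "\<lambda>(I,m2,m1). (m1 \<union> m2, m2)" and i = "\<lambda>(m,m2). (\<Union>m2, m2, m - m2)"])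
    fix a assume a: "a \<in> Sigma A (\<lambda>I. M2 I \<times> M1 I)"
    obtain I m2 m1 where aa: "a = (I, m2, m1)" by (cases a) auto
    have I: "I \<in> A" and m2: "m2 \<in> M2 I" and m1: "m1 \<in> M1 I" using a unfolding aa by auto
    have IS: "I \<subseteq> S" and bI: "bo I \<le> k" using I unfolding A_def by auto
    have m1': "m1 \<in> Mset (k - bo I) (S - I)" using m1 unfolding M1_def Mpos_def by simp
    have m2': "m2 \<in> Mset (bo I) I" using m2 unfolding M2_def by simp
    have g: "m1 \<union> m2 \<in> Mset k S" "m1 \<inter> m2 = {}" using glue[OF fS IS bI m2' m1'] by auto
    have u2: "\<Union>m2 = I" using m2' by (auto simp: Mset_def partition_on_def)
    have "(m1 \<union> m2) - m2 = m1" using g(2) by auto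
    then show "(\<lambda>(m,m2). (\<Union>m2, m2, m - m2)) ((\<lambda>(I,m2,m1). (m1 \<union> m2, m2)) a) = a"
      unfolding aa using u2 by simp
    have "m2 \<in> X (m1 \<union> m2)" using m1 \<open>(m1 \<union> m2) - m2 = m1\<close> unfolding X_def M1_def Mpos_def by auto
    then show "(\<lambda>(I,m2,m1). (m1 \<union> m2, m2)) a \<in> Sigma (Mset k S) X" unfolding aa using g by simp
    show "(case (\<lambda>(I,m2,m1). (m1 \<union> m2, m2)) a of (m, m2) \<Rightarrow> (-1) ^ card m2 * sgm m) = (case a of (I, p) \<Rightarrow> f p)"
      unfolding aa f_def by simp
  next
    fix b assume b: "b \<in> Sigma (Mset k S) X"
    obtain m m2 where bb: "b = (m, m2)" by (cases b) auto
    have m: "m \<in> Mset k S" and m2: "m2 \<subseteq> m" and ps: "\<forall>B\<in>m - m2. sJ B lam > 0"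
      using b unfolding bb X_def by auto
    show "(\<lambda>(I,m2,m1). (m1 \<union> m2, m2)) ((\<lambda>(m,m2). (\<Union>m2, m2, m - m2)) b) = b"
      unfolding bb using m2 by auto
    note sb = split_back[OF fS m m2 k]
    have "\<Union>m2 \<in> A" using sb unfolding A_def by simp
    moreover have "m2 \<in> M2 (\<Union>m2)" using sb unfolding M2_def by simp
    moreover have "m - m2 \<in> M1 (\<Union>m2)" using sb ps unfolding M1_def Mpos_def by simp
    ultimately show "(\<lambda>(m,m2). (\<Union>m2, m2, m - m2)) b \<in> Sigma A (\<lambda>I. M2 I \<times> M1 I)" unfolding bb by simp
  qed
  also have "\<dots> = (\<Sum>m\<in>Mset k S. \<Sum>m2\<in>X m. (-1) ^ card m2 * sgm m)"
  proof (rule sum.Sigma[symmetric])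
    show "finite (Mset k S)" using Mset_finite[OF fS] .
    show "\<forall>m\<in>Mset k S. finite (X m)"
    proof
      fix m assume "m \<in> Mset k S"
      then have "finite m" using fin_part[of S m] fS by (simp add: Mset_def)
      then have "finite (Pow m)" by simp
      moreover have "X m \<subseteq> Pow m" unfolding X_def by auto
      ultimately show "finite (X m)" by (rule finite_subset[rotated])
    qed
  qed
  also have "\<dots> = (\<Sum>m\<in>Mset k S. sgm m * (\<Sum>m2\<in>X m. (-1) ^ card m2))"
    by (simp add: sum_distrib_left algebra_simps)
  also have "\<dots> = 0"
    using inner_zero[OF _ fS pos] unfolding X_def by (intro sum.neutral) simp
  finally show ?thesis unfolding A_def by simp
qed



definition ords :: "nat set \<Rightarrow> nat set list set" where
  "ords S = {P. partition_on S (set P) \<and> distinct P}"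

definition ppos :: "(nat \<Rightarrow> real) \<Rightarrow> nat set list \<Rightarrow> bool" where
  "ppos lam P \<longleftrightarrow> (\<forall>i\<in>{1..length P}. sum_list (map (\<lambda>I. sJ I lam) (take i P)) > 0)"

definition Lset :: "(nat \<Rightarrow> real) \<Rightarrow> nat \<Rightarrow> nat set \<Rightarrow> nat set list set" where
  "Lset lam k S = {P \<in> ords S. ppos lam P \<and> nodd (set P) = k}"

definition w :: "nat set list \<Rightarrow> int" where
  "w P = (-1) ^ length P * sg P * eps' P"

lemma wfp_ords: "partition_on S (set P) \<Longrightarrow> distinct P \<Longrightarrow> finite S \<Longrightarrow> wfp P"
  using part_famok[of S "set P"] unfolding wfp_def famok_def by auto

lemma Lset_finite: "finite S \<Longrightarrow> finite (Lset lam k S)"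
proof -
  assume f: "finite S"
  have "Lset lam k S \<subseteq> {P. set P \<subseteq> Pow S \<and> distinct P}"
    unfolding Lset_def ords_def partition_on_def by auto
  moreover have "finite {P. set P \<subseteq> Pow S \<and> distinct P}" using finite_subset_distinct[of "Pow S"] f by simp
  ultimately show ?thesis by (rule finite_subset)
qed

lemma sumlist_part:
  assumes "wfp P"
  shows "sum_list (map (\<lambda>I. sJ I lam) P) = sJ (\<Union>(set P)) lam"
proof -
  have d: "distinct P" and fin: "\<forall>A\<in>set P. finite A" and dj: "\<forall>A\<in>set P. \<forall>B\<in>set P. A \<noteq> B \<longrightarrow> A \<inter> B = {}"
    using assms unfolding wfp_def pairwise_def disjnt_def by auto
  have "sum_list (map (\<lambda>I. sJ I lam) P) = (\<Sum>I\<in>set P. sJ I lam)"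
    using d by (simp add: sum.distinct_set_conv_list)
  also have "\<dots> = (\<Sum>I\<in>set P. sum lam I)" unfolding sJ_def ..
  also have "\<dots> = sum lam (\<Union>(set P))"
  proof -
    have "sum lam (\<Union>(set P)) = (sum \<circ> sum) lam (set P)" by (rule sum.Union_disjoint[OF fin dj])
    then show ?thesis by simp
  qed
  finally show ?thesis unfolding sJ_def .
qed

lemma even_eps_sum: "even (\<Sum>I\<leftarrow>P. card I * (card I - 1))"
  by (induction P) auto

lemma div2_add: "even (x::nat) \<Longrightarrow> (x + y) div 2 = x div 2 + y div 2"
  by (elim evenE) simp

lemma eps'_snoc: "eps' (P @ [I]) = eps' P * eps1 I"
proof -
  have "(\<Sum>J\<leftarrow>P @ [I]. card J * (card J - 1)) div 2 = (\<Sum>J\<leftarrow>P. card J * (card J - 1)) div 2 + card I * (card I - 1) div 2"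
    using div2_add[OF even_eps_sum[of P]] by simp
  then show ?thesis unfolding eps'_def eps1_def by (simp only: power_add)
qed

lemma sg_snoc: "wfp (P @ [I]) \<Longrightarrow> sg (P @ [I]) = sg P * (-1) ^ cr (\<Union>(set P)) I"
  using sg_append[of P "[I]"] by simp

lemma nodd_single_bo: "nodd {I} = bo I"
  by (simp add: nodd_single bo_def)

lemma Lset_nonempty_list: "P \<in> Lset lam k S \<Longrightarrow> S \<noteq> {} \<Longrightarrow> P \<noteq> []"
  unfolding Lset_def ords_def partition_on_def by auto

lemma rec_nonpos:
  assumes "finite S" "S \<noteq> {}" "\<not> sJ S lam > 0"
  shows "Lset lam k S = {}"
proof (rule ccontr)
  assume "Lset lam k S \<noteq> {}"
  then obtain P where P: "P \<in> Lset lam k S" by blast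
  have ne: "P \<noteq> []" using Lset_nonempty_list[OF P assms(2)] .
  have ps: "partition_on S (set P)" "distinct P" "ppos lam P" using P unfolding Lset_def ords_def by auto
  have "length P \<in> {1..length P}" using ne by (simp add: Suc_leI)
  then have "sum_list (map (\<lambda>I. sJ I lam) (take (length P) P)) > 0"
    using ps(3) unfolding ppos_def by blast
  moreover have "sum_list (map (\<lambda>I. sJ I lam) P) = sJ S lam"
    using sumlist_part[OF wfp_ords[OF ps(1,2) assms(1)]] ps(1) by (simp add: partition_on_def)
  ultimately show False using assms(3) by simp
qed



lemma rec_pos:
  assumes fS: "finite S" and ne: "S \<noteq> {}" and k: "k \<le> 1" and pos: "sJ S lam > 0"
  shows "(\<Sum>(I,P')\<in>Sigma {I. I \<subseteq> S \<and> I \<noteq> {} \<and> bo I \<le> k} (\<lambda>I. Lset lam (k - bo I) (S - I)).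
            (-1::int) ^ cr (S - I) I * eps1 I * w P') = (\<Sum>P\<in>Lset lam k S. - w P)"
proof (rule sum.reindex_bij_witness[where j = "\<lambda>(I,P'). P' @ [I]" and i = "\<lambda>P. (last P, butlast P)"])
  fix a assume a: "a \<in> Sigma {I. I \<subseteq> S \<and> I \<noteq> {} \<and> bo I \<le> k} (\<lambda>I. Lset lam (k - bo I) (S - I))"
  obtain I P' where aa: "a = (I, P')" by (cases a) auto
  have IS: "I \<subseteq> S" and Ine: "I \<noteq> {}" and bI: "bo I \<le> k" and P': "P' \<in> Lset lam (k - bo I) (S - I)"
    using a unfolding aa by auto
  show "(\<lambda>P. (last P, butlast P)) ((\<lambda>(I,P'). P' @ [I]) a) = a" unfolding aa by simp
  have pP': "partition_on (S - I) (set P')" and dP': "distinct P'" and ppP': "ppos lam P'"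
    and nP': "nodd (set P') = k - bo I" using P' unfolding Lset_def ords_def by auto
  have pI: "partition_on I {I}" using Ine by (rule partition_on_space)
  have u: "partition_on ((S - I) \<union> I) (set P' \<union> {I})" "set P' \<inter> {I} = {}"
    using part_union[OF pP' pI] by auto
  have SI: "(S - I) \<union> I = S" using IS by auto
  have part: "partition_on S (set (P' @ [I]))" using u(1) SI by simp
  have dist: "distinct (P' @ [I])" using u(2) dP' by auto
  have wf: "wfp (P' @ [I])" using wfp_ords[OF part dist fS] .
  have pp: "ppos lam (P' @ [I])"
    unfolding ppos_def
  proof
    fix i assume i: "i \<in> {1..length (P' @ [I])}"
    show "sum_list (map (\<lambda>I. sJ I lam) (take i (P' @ [I]))) > 0"
    proof (cases "i \<le> length P'")
      case True
      then have "take i (P' @ [I]) = take i P'" by simp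
      moreover have "i \<in> {1..length P'}" using i True by simp
      ultimately show ?thesis using ppP' unfolding ppos_def by simp
    next
      case False
      then have "take i (P' @ [I]) = P' @ [I]" using i by simp
      moreover have "sum_list (map (\<lambda>I. sJ I lam) (P' @ [I])) = sJ S lam"
        using sumlist_part[OF wf] part by (simp add: partition_on_def)
      ultimately show ?thesis using pos by simp
    qed
  qed
  have fP': "finite (set P')" by simp
  have "nodd (set (P' @ [I])) = nodd (set P') + nodd {I}"
    using nodd_union[OF fP', of "{I}"] u(2) by simp
  then have nn: "nodd (set (P' @ [I])) = k" using nP' bI by (simp add: nodd_single_bo)
  show "(\<lambda>(I,P'). P' @ [I]) a \<in> Lset lam k S"
    unfolding aa Lset_def ords_def using part dist pp nn by simp
  have U: "\<Union>(set P') = S - I" using pP' by (simp add: partition_on_def)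
  show "- w ((\<lambda>(I,P'). P' @ [I]) a) = (case a of (I, P') \<Rightarrow> (-1) ^ cr (S - I) I * eps1 I * w P')"
    unfolding aa w_def using sg_snoc[OF wf] eps'_snoc[of P' I] U by (simp add: algebra_simps)
next
  fix b assume b: "b \<in> Lset lam k S"
  have bne: "b \<noteq> []" using Lset_nonempty_list[OF b ne] .
  then show "(\<lambda>(I,P'). P' @ [I]) ((\<lambda>P. (last P, butlast P)) b) = b" by simp
  define I where "I = last b"
  define P' where "P' = butlast b"
  have bb: "b = P' @ [I]" unfolding I_def P'_def using bne by simp
  have part: "partition_on S (set b)" and dist: "distinct b" and ppb: "ppos lam b" and nb: "nodd (set b) = k"
    using b unfolding Lset_def ords_def by auto
  have Ib: "I \<in> set b" unfolding bb by simp
  have IS: "I \<subseteq> S" and Ine: "I \<noteq> {}" using part Ib unfolding partition_on_def by auto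
  have IP': "I \<notin> set P'" using dist unfolding bb by simp
  have dP': "distinct P'" using dist unfolding bb by simp
  have sP': "set P' = set b - {I}" using IP' unfolding bb by auto
  have pP': "partition_on (S - I) (set P')" using part_sub(2)[OF part, of "{I}"] Ib sP' by simp
  have fP': "finite (set P')" by simp
  have nsplit: "nodd (set b) = nodd (set P') + bo I"
    using nodd_union[OF fP', of "{I}"] IP' unfolding bb by (simp add: nodd_single_bo)
  have bI: "bo I \<le> k" using nsplit nb by simp
  have nP': "nodd (set P') = k - bo I" using nsplit nb by simp
  have ppP': "ppos lam P'"
    unfolding ppos_def
  proof
    fix i assume i: "i \<in> {1..length P'}"
    then have "take i b = take i P'" unfolding bb by simp
    moreover have "i \<in> {1..length b}" using i unfolding bb by simp
    ultimately show "sum_list (map (\<lambda>I. sJ I lam) (take i P')) > 0" using ppb unfolding ppos_def by metis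
  qed
  have "P' \<in> Lset lam (k - bo I) (S - I)" unfolding Lset_def ords_def using pP' dP' ppP' nP' by simp
  then show "(\<lambda>P. (last P, butlast P)) b \<in> Sigma {I. I \<subseteq> S \<and> I \<noteq> {} \<and> bo I \<le> k} (\<lambda>I. Lset lam (k - bo I) (S - I))"
    using IS Ine bI unfolding I_def P'_def by simp
qed

lemma Mpos_empty_nonpos:
  assumes "finite S" "S \<noteq> {}" "\<not> sJ S lam > 0"
  shows "Mpos lam k S = {}"
proof (rule ccontr)
  assume "Mpos lam k S \<noteq> {}"
  then obtain m where m: "m \<in> Mpos lam k S" by blast
  have pm: "partition_on S m" and ps: "\<forall>B\<in>m. sJ B lam > 0" using m unfolding Mpos_def Mset_def by auto
  have fm: "finite m" using fin_part[OF pm assms(1)] .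
  have "m \<noteq> {}" using pm assms(2) unfolding partition_on_def by auto
  then have "(\<Sum>B\<in>m. sJ B lam) > 0" using ps fm by (intro sum_pos) auto
  then show False using sJ_part[OF pm assms(1), of lam] assms(3) by simp
qed

lemma main_gen:
  assumes "finite S" "k \<le> 1"
  shows "(\<Sum>P\<in>Lset lam k S. w P) = Eg lam k S"
  using assms
proof (induction "card S" arbitrary: S k rule: less_induct)
  case less
  show ?case
  proof (cases "S = {}")
    case True
    have L: "Lset lam k S = (if k = 0 then {[]} else {})"
      using True by (auto simp: Lset_def ords_def partition_on_empty ppos_def nodd_def)
    have M: "Mpos lam k S = (if k = 0 then {{}} else {})"
      using True by (auto simp: Mpos_def Mset_def partition_on_empty nodd_def)
    show ?thesis using True unfolding L Eg_def M by (simp add: w_def eps'_def)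
  next
    case False
    note fS = less.prems(1) and k = less.prems(2)
    show ?thesis
    proof (cases "sJ S lam > 0")
      case False
      then show ?thesis using rec_nonpos[OF fS \<open>S \<noteq> {}\<close> False] Mpos_empty_nonpos[OF fS \<open>S \<noteq> {}\<close> False]
        by (simp add: Eg_def)
    next
      case True
      note pos = True
      define A' where "A' = {I. I \<subseteq> S \<and> I \<noteq> {} \<and> bo I \<le> k}"
      define c where "c I = (-1::int) ^ cr (S - I) I * eps1 I" for I
      have finA': "finite A'" unfolding A'_def by (rule finite_subset[of _ "Pow S"]) (use fS in auto)
      have finL: "\<forall>I\<in>A'. finite (Lset lam (k - bo I) (S - I))" using Lset_finite fS by simp
      have "(\<Sum>P\<in>Lset lam k S. - w P) = (\<Sum>(I,P')\<in>Sigma A' (\<lambda>I. Lset lam (k - bo I) (S - I)). c I * w P')"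
        using rec_pos[OF fS \<open>S \<noteq> {}\<close> k pos] unfolding A'_def c_def by simp
      also have "\<dots> = (\<Sum>I\<in>A'. \<Sum>P'\<in>Lset lam (k - bo I) (S - I). c I * w P')"
        by (rule sum.Sigma[OF finA' finL, symmetric])
      also have "\<dots> = (\<Sum>I\<in>A'. c I * Eg lam (k - bo I) (S - I))"
      proof (rule sum.cong)
        fix I assume I: "I \<in> A'"
        have lt: "card (S - I) < card S"
        proof (rule psubset_card_mono[OF fS])
          obtain x where "x \<in> I" using I unfolding A'_def by blast
          then have "x \<in> S" "x \<notin> S - I" using I unfolding A'_def by auto
          then show "S - I \<subset> S" by blast
        qed
        have "(\<Sum>P'\<in>Lset lam (k - bo I) (S - I). w P') = Eg lam (k - bo I) (S - I)"
          using less.hyps[OF lt] fS k by simp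
        then show "(\<Sum>P'\<in>Lset lam (k - bo I) (S - I). c I * w P') = c I * Eg lam (k - bo I) (S - I)"
          by (simp add: sum_distrib_left[symmetric])
      qed simp
      finally have L: "(\<Sum>P\<in>Lset lam k S. - w P) = (\<Sum>I\<in>A'. c I * Eg lam (k - bo I) (S - I))" .
      have Aeq: "{I. I \<subseteq> S \<and> bo I \<le> k} = insert {} A'" unfolding A'_def by (auto simp: bo_def)
      have "{} \<notin> A'" unfolding A'_def by simp
      have "0 = (\<Sum>I\<in>{I. I \<subseteq> S \<and> bo I \<le> k}. c I * Eg lam (k - bo I) (S - I))"
        using key[OF fS k pos] unfolding c_def by simp
      also have "\<dots> = c {} * Eg lam k S + (\<Sum>I\<in>A'. c I * Eg lam (k - bo I) (S - I))"
        unfolding Aeq using finA' \<open>{} \<notin> A'\<close> by (simp add: bo_def)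
      also have "c {} = 1" unfolding c_def eps1_def by simp
      finally have "(\<Sum>I\<in>A'. c I * Eg lam (k - bo I) (S - I)) = - Eg lam k S" by simp
      then show ?thesis using L by (simp add: sum_negf)
    qed
  qed
qed



lemma P0ord_lam_eq: "P0ord_lam n lam = Lset lam 0 {1..n} \<union> Lset lam 1 {1..n}"
proof -
  have e: "(c \<le> (1::nat)) = (c = 0 \<or> c = 1)" for c by auto
  show ?thesis
    unfolding P0ord_lam_def Pord_def P0ord_def P0_def part_def ordpart_def Lset_def ords_def ppos_def nodd_def
    apply (rule set_eqI)
    apply (simp only: mem_Collect_eq Int_iff Un_iff e)
    by blast
qed

lemma P0le2_eq: "P0le2 n lam = Mpos lam 0 {1..n} \<union> Mpos lam 1 {1..n}"
  unfolding P0le2_def P0_def Plam_def part_def Mpos_def Mset_def nodd_def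
  by auto

lemma eps_part_eq:
  assumes "p \<in> P0le2 n lam"
  shows "eps_part n p = sgm p"
proof -
  have pp: "partition_on {1..n} p" and np: "nodd p \<le> 1"
    using assms unfolding P0le2_def P0_def part_def nodd_def by auto
  have fa: "famok p" using part_famok[OF pp] by simp
  then have "finite p" unfolding famok_def by simp
  then obtain xs where xs: "set xs = p" "distinct xs" using finite_distinct_list by blast
  then have ex: "\<exists>P. P \<in> ordpart n \<and> set P = p" using pp unfolding ordpart_def by auto
  define Q where "Q = (SOME P. P \<in> ordpart n \<and> set P = p)"
  have Q: "Q \<in> ordpart n" "set Q = p" using someI_ex[OF ex] unfolding Q_def by auto
  have dQ: "distinct Q" and pQ: "partition_on {1..n} (set Q)" using Q unfolding ordpart_def by auto
  have wQ: "wfp Q" using wfp_ords[OF pQ dQ] by simp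
  have "eps_part n p = epsP Q" unfolding eps_part_def Q_def ..
  also have "\<dots> = sg Q"
  proof -
    have "\<Union>(set Q) = {1..n}" using pQ by (simp add: partition_on_def)
    then show ?thesis by (rule epsP_sg[OF wQ])
  qed
  also have "\<dots> = sgm p" using sgm_eq[OF fa np dQ Q(2)] by simp
  finally show ?thesis .
qed

theorem mainTheorem8:
  fixes n :: nat and lam :: "nat \<Rightarrow> real"
  shows "(\<Sum>P\<in>P0ord_lam n lam. (-1) ^ length P * epsP P * eps' P)
       = (-1) ^ n * (\<Sum>p\<in>P0le2 n lam. eps_part n p)"
proof -
  have fin: "finite {1..n::nat}" by simp
  have dL: "Lset lam 0 {1..n} \<inter> Lset lam 1 {1..n} = {}" unfolding Lset_def by auto
  have dM: "Mpos lam 0 {1..n} \<inter> Mpos lam 1 {1..n} = {}" unfolding Mpos_def Mset_def by auto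
  have fL: "finite (Lset lam 0 {1..n})" "finite (Lset lam 1 {1..n})" using Lset_finite[OF fin] by auto
  have fM: "finite (Mpos lam 0 {1..n})" "finite (Mpos lam 1 {1..n})"
    using Mset_finite[OF fin] unfolding Mpos_def by auto
  have eqw: "(-1) ^ length P * epsP P * eps' P = w P" if "P \<in> P0ord_lam n lam" for P
  proof -
    have "P \<in> ordpart n" using that unfolding P0ord_lam_def Pord_def by auto
    then have pP: "partition_on {1..n} (set P)" and dP: "distinct P" unfolding ordpart_def by auto
    have "\<Union>(set P) = {1..n}" using pP by (simp add: partition_on_def)
    then have "epsP P = sg P" by (rule epsP_sg[OF wfp_ords[OF pP dP fin]])
    then show ?thesis unfolding w_def by simp
  qed
  have "(\<Sum>P\<in>P0ord_lam n lam. (-1) ^ length P * epsP P * eps' P) = (\<Sum>P\<in>P0ord_lam n lam. w P)"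
    using eqw by (intro sum.cong) auto
  also have "\<dots> = (\<Sum>P\<in>Lset lam 0 {1..n}. w P) + (\<Sum>P\<in>Lset lam 1 {1..n}. w P)"
    unfolding P0ord_lam_eq by (rule sum.union_disjoint[OF fL dL])
  also have "\<dots> = Eg lam 0 {1..n} + Eg lam 1 {1..n}" using main_gen[OF fin] by simp
  also have "\<dots> = (-1) ^ n * ((\<Sum>m\<in>Mpos lam 0 {1..n}. sgm m) + (\<Sum>m\<in>Mpos lam 1 {1..n}. sgm m))"
    unfolding Eg_def by (simp add: algebra_simps)
  also have "(\<Sum>m\<in>Mpos lam 0 {1..n}. sgm m) + (\<Sum>m\<in>Mpos lam 1 {1..n}. sgm m) = (\<Sum>p\<in>P0le2 n lam. sgm p)"
    unfolding P0le2_eq by (rule sum.union_disjoint[OF fM dM, symmetric])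
  also have "\<dots> = (\<Sum>p\<in>P0le2 n lam. eps_part n p)" using eps_part_eq by (intro sum.cong) auto
  finally show ?thesis .
qed


end
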